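(* Let $q\in\mathbb{C}$ be generic, let $\hbar,c\in\mathbb{C}$, and let $A^c_{\hbar,q}$, $K$, $\tilde v$ be as in the context. For each $k=0,1,2,\dots$ put $$\lambda_k=\frac{(q^{2k}-1)(q^{2(k+1)}-1)}{q^{2k-2}(q^2-1)^2}.$$ Then for every $k=0,1,2,\dots$ there exists a unique polynomial of the form $P_k(\tilde v)=\sum_{j=0}^{k}A^k_j\,\tilde v^{k-j}$ with $A^k_j\in\mathbb{C}$ and $A^k_0=1$ such that $K\,P_k(\tilde v)=\lambda_k\,P_k(\tilde v)$ in $A^c_{\hbar,q}$.
   Context: $U_q(sl(2))$ is the algebra generated by $E_+,E_-,X,Y$ with relations $E_{\pm}X=q^{\pm1}XE_{\pm}$, $E_{\pm}Y=q^{\mp1}YE_{\pm}$, $E_+E_-=E_-E_+=1$, $XY-YX=\frac{E_+^2-E_-^2}{q-q^{-1}}$, with coproduct $\Delta(X)=E_-\otimes X+X\otimes E_+$, $\Delta(Y)=E_-\otimes Y+Y\otimes E_+$, $\Delta(E_\pm)=E_\pm\otimes E_\pm$. The quantum Casimir is $K=\frac{q}{2}(XY+YX)+\frac{q^2(1+q^2)}{2(1-q^2)^2}(E_+^2+E_-^2-2)$. Let $\mathbf V$ be the 3-dimensional $U_q(sl(2))$-module with basis $u,v,w$ and action $E_\pm u=q^{\pm1}u$, $E_\pm v=v$, $E_\pm w=q^{\mp1}w$, $Xu=0$, $Xv=-(q+q^{-1})u$, $Xw=v$, $Yu=-v$, $Yv=(q+q^{-1})w$, $Yw=0$. The algebra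 $A^c_{\hbar,q}$ is the quotient of the tensor algebra $T(\mathbf V)$ by the two-sided ideal generated by $(q^2+1)uw+vv+\frac{q^2+1}{q^2}wu-c$, $q^2uv-vu+\hbar u$, $(q^2+1)(uw-wu)+(1-q^2)vv-\hbar v$, $-q^2vw+wv-\hbar w$. $U_q(sl(2))$ acts on $A^c_{\hbar,q}$ via the coproduct (i.e. $Z(fg)=\sum Z_{(1)}(f)Z_{(2)}(g)$ for $\Delta Z=\sum Z_{(1)}\otimes Z_{(2)}$), so $K$ acts as a linear operator on $A^c_{\hbar,q}$. Set $a=\hbar(1-q^2)^{-1}$ and $\tilde v=v-a\in A^c_{\hbar,q}$; $\tilde v^k$ is its $k$-th power in $A^c_{\hbar,q}$. "Generic $q$" means $q$ avoids a certain set of exceptional values (in particular $q\neq0$, $q^2\neq1$). *)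

theory Defs
  imports Complex_Main
begin

datatype gen = U | V | W

text \<open>Elements of T(V) are represented as coefficient functions on words
  (finite support is automatic for everything built below).\<close>
type_synonym tens = "gen list \<Rightarrow> complex"

definition tadd :: "tens \<Rightarrow> tens \<Rightarrow> tens" where
  "tadd f g = (\<lambda>w. f w + g w)"

definition tsmult :: "complex \<Rightarrow> tens \<Rightarrow> tens" where
  "tsmult c f = (\<lambda>w. c * f w)"

definition tmono :: "gen list \<Rightarrow> tens" where
  "tmono ws = (\<lambda>w. if w = ws then 1 else 0)"

definition tone :: tens where
  "tone = tmono []"

definition tmul :: "tens \<Rightarrow> tens \<Rightarrow> tens" where
  "tmul f g = (\<lambda>w. \<Sum>i\<le>length w. f (take i w) * g (drop i w))"

fun tpow :: "tens \<Rightarrow> nat \<Rightarrow> tens" where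
  "tpow f 0 = tone"
| "tpow f (Suc n) = tmul f (tpow f n)"

definition rel1 :: "complex \<Rightarrow> complex \<Rightarrow> complex \<Rightarrow> tens" where
  "rel1 q h c = tadd (tsmult (q^2 + 1) (tmono [U, W]))
     (tadd (tmono [V, V]) (tadd (tsmult ((q^2 + 1) / q^2) (tmono [W, U])) (tsmult (- c) tone)))"

definition rel2 :: "complex \<Rightarrow> complex \<Rightarrow> complex \<Rightarrow> tens" where
  "rel2 q h c = tadd (tsmult (q^2) (tmono [U, V]))
     (tadd (tsmult (-1) (tmono [V, U])) (tsmult h (tmono [U])))"

definition rel3 :: "complex \<Rightarrow> complex \<Rightarrow> complex \<Rightarrow> tens" where
  "rel3 q h c = tadd (tsmult (q^2 + 1) (tadd (tmono [U, W]) (tsmult (-1) (tmono [W, U]))))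
     (tadd (tsmult (1 - q^2) (tmono [V, V])) (tsmult (- h) (tmono [V])))"

definition rel4 :: "complex \<Rightarrow> complex \<Rightarrow> complex \<Rightarrow> tens" where
  "rel4 q h c = tadd (tsmult (- (q^2)) (tmono [V, W]))
     (tadd (tmono [W, V]) (tsmult (- h) (tmono [W])))"

definition rels :: "complex \<Rightarrow> complex \<Rightarrow> complex \<Rightarrow> tens set" where
  "rels q h c = {rel1 q h c, rel2 q h c, rel3 q h c, rel4 q h c}"

inductive_set ideal :: "complex \<Rightarrow> complex \<Rightarrow> complex \<Rightarrow> tens set"
  for q h c where
  zero: "(\<lambda>w. 0) \<in> ideal q h c"
| gen: "r \<in> rels q h c \<Longrightarrow> tmul (tmono a) (tmul r (tmono b)) \<in> ideal q h c"
| add: "x \<in> ideal q h c \<Longrightarrow> y \<in> ideal q h c \<Longrightarrow> tadd x y \<in> ideal q h c"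
| smult: "x \<in> ideal q h c \<Longrightarrow> tsmult d x \<in> ideal q h c"

text \<open>Weight: E_+ acts on a generator g by q powi wt g.\<close>
fun wt :: "gen \<Rightarrow> int" where
  "wt U = 1" | "wt V = 0" | "wt W = -1"

definition wtw :: "gen list \<Rightarrow> int" where
  "wtw ws = sum_list (map wt ws)"

fun genX :: "complex \<Rightarrow> gen \<Rightarrow> tens" where
  "genX q U = (\<lambda>w. 0)"
| "genX q V = tsmult (- (q + inverse q)) (tmono [U])"
| "genX q W = tmono [V]"

fun genY :: "complex \<Rightarrow> gen \<Rightarrow> tens" where
  "genY q U = tsmult (-1) (tmono [V])"
| "genY q V = tsmult (q + inverse q) (tmono [W])"
| "genY q W = (\<lambda>w. 0)"

text \<open>Using Delta(Z) = E_- (x) Z + Z (x) E_+ for Z = X, Y, on a word x # xs.\<close>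
fun wordX :: "complex \<Rightarrow> gen list \<Rightarrow> tens" where
  "wordX q [] = (\<lambda>w. 0)"
| "wordX q (x # xs) =
     tadd (tsmult (q powi (- wt x)) (tmul (tmono [x]) (wordX q xs)))
          (tsmult (q powi (wtw xs)) (tmul (genX q x) (tmono xs)))"

fun wordY :: "complex \<Rightarrow> gen list \<Rightarrow> tens" where
  "wordY q [] = (\<lambda>w. 0)"
| "wordY q (x # xs) =
     tadd (tsmult (q powi (- wt x)) (tmul (tmono [x]) (wordY q xs)))
          (tsmult (q powi (wtw xs)) (tmul (genY q x) (tmono xs)))"

definition lin :: "(gen list \<Rightarrow> tens) \<Rightarrow> tens \<Rightarrow> tens" where
  "lin T f = (\<lambda>w'. \<Sum>w\<in>{w. f w \<noteq> 0}. f w * T w w')"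

definition actX :: "complex \<Rightarrow> tens \<Rightarrow> tens" where
  "actX q = lin (wordX q)"

definition actY :: "complex \<Rightarrow> tens \<Rightarrow> tens" where
  "actY q = lin (wordY q)"

text \<open>E_+^2 + E_-^2 - 2 acting on a word.\<close>
definition actE :: "complex \<Rightarrow> tens \<Rightarrow> tens" where
  "actE q = lin (\<lambda>ws. tsmult (q powi (2 * wtw ws) + q powi (- 2 * wtw ws) - 2) (tmono ws))"

definition actK :: "complex \<Rightarrow> tens \<Rightarrow> tens" where
  "actK q f = tadd (tsmult (q / 2) (tadd (actX q (actY q f)) (actY q (actX q f))))
                   (tsmult (q^2 * (1 + q^2) / (2 * (1 - q^2)^2)) (actE q f))"

definition vtilde :: "complex \<Rightarrow> complex \<Rightarrow> tens" where
  "vtilde q h = tadd (tmono [V]) (tsmult (- (h / (1 - q^2))) tone)"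

definition Ppoly :: "complex \<Rightarrow> complex \<Rightarrow> nat \<Rightarrow> (nat \<Rightarrow> complex) \<Rightarrow> tens" where
  "Ppoly q h k A = (\<lambda>w. \<Sum>j\<le>k. A j * tpow (vtilde q h) (k - j) w)"

definition lam :: "complex \<Rightarrow> nat \<Rightarrow> complex" where
  "lam q k = ((q ^ (2 * k) - 1) * (q ^ (2 * (k + 1)) - 1)) /
             (q powi (2 * int k - 2) * (q^2 - 1)^2)"

definition generic_q :: "complex \<Rightarrow> bool" where
  "generic_q q \<longleftrightarrow> q \<noteq> 0 \<and> (\<forall>n::nat. n > 0 \<longrightarrow> q ^ n \<noteq> 1)"

end

theory Submission
  imports Defs "HOL-Computational_Algebra.Polynomial"
begin

definition fs :: "tens \<Rightarrow> bool" where "fs f \<longleftrightarrow> finite {w. f w \<noteq> 0}"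

lemma tmul_assoc: "tmul (tmul f g) h = tmul f (tmul g h)"
proof (rule ext)
  fix w :: "gen list"
  let ?n = "length w"
  define F where "F j l = f (take j w) * g (take l (drop j w)) * h (drop (j+l) w)" for j l
  have L: "tmul (tmul f g) h w = (\<Sum>i\<le>?n. \<Sum>j\<le>i. F j (i - j))"
    unfolding tmul_def F_def
    by (auto simp: sum_distrib_right min_def drop_take intro!: sum.cong)
  have R: "tmul f (tmul g h) w = (\<Sum>j\<le>?n. \<Sum>l\<le>?n - j. F j l)"
    unfolding tmul_def F_def by (auto simp: sum_distrib_left mult.assoc add.commute intro!: sum.cong)
  have "(\<Sum>i\<le>?n. \<Sum>j\<le>i. F j (i - j)) = (\<Sum>(j,l)\<in>{(j,l). j+l \<le> ?n}. F j l)"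
    by (rule sum.triangle_reindex_eq[symmetric])
  also have "{(j,l). j+l \<le> ?n} = Sigma {..?n} (\<lambda>j. {..?n - j})" by auto
  also have "(\<Sum>(j,l)\<in>Sigma {..?n} (\<lambda>j. {..?n - j}). F j l) = (\<Sum>j\<le>?n. \<Sum>l\<le>?n - j. F j l)"
    by (rule sum.Sigma[symmetric]) auto
  finally show "tmul (tmul f g) h w = tmul f (tmul g h) w" using L R by simp
qed

lemma tmul_tone_left: "tmul tone f = f"
proof (rule ext)
  fix w :: "gen list"
  have "tmul tone f w = (\<Sum>i\<le>length w. if i = 0 then f w else 0)"
    unfolding tmul_def tone_def tmono_def by (intro sum.cong) auto
  then show "tmul tone f w = f w" by simp
qed

lemma tmul_tone_right: "tmul f tone = f"
proof (rule ext)
  fix w :: "gen list"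
  have "tmul f tone w = (\<Sum>i\<le>length w. if i = length w then f w else 0)"
    unfolding tmul_def tone_def tmono_def by (intro sum.cong) auto
  then show "tmul f tone w = f w" by simp
qed

lemma tmul_tadd_left: "tmul (tadd f g) h = tadd (tmul f h) (tmul g h)"
  unfolding tmul_def tadd_def by (simp add: sum.distrib distrib_right)
lemma tmul_tadd_right: "tmul h (tadd f g) = tadd (tmul h f) (tmul h g)"
  unfolding tmul_def tadd_def by (simp add: sum.distrib distrib_left)
lemma tmul_tsmult_left: "tmul (tsmult c f) g = tsmult c (tmul f g)"
  unfolding tmul_def tsmult_def by (simp add: sum_distrib_left mult.assoc)
lemma tmul_tsmult_right: "tmul g (tsmult c f) = tsmult c (tmul g f)"
  unfolding tmul_def tsmult_def by (simp add: sum_distrib_left mult.left_commute)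
lemma tmul_zero_left: "tmul (\<lambda>w. 0) f = (\<lambda>w. 0)" unfolding tmul_def by simp
lemma tmul_zero_right: "tmul f (\<lambda>w. 0) = (\<lambda>w. 0)" unfolding tmul_def by simp

lemma tmono_append: "tmul (tmono a) (tmono b) = tmono (a @ b)"
proof (rule ext)
  fix w :: "gen list"
  have "tmul (tmono a) (tmono b) w = (\<Sum>i\<le>length w. if i = length a \<and> w = a @ b then 1 else 0)"
    unfolding tmul_def tmono_def
    by (intro sum.cong) (auto simp: append_eq_conv_conj)
  also have "\<dots> = tmono (a @ b) w" unfolding tmono_def by (auto simp: sum.delta)
  finally show "tmul (tmono a) (tmono b) w = tmono (a @ b) w" .
qed

lemma fs_tmul: "fs f \<Longrightarrow> fs g \<Longrightarrow> fs (tmul f g)"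
proof -
  assume "fs f" "fs g"
  have "{w. tmul f g w \<noteq> 0} \<subseteq> (\<lambda>(a,b). a @ b) ` ({w. f w \<noteq> 0} \<times> {w. g w \<noteq> 0})"
  proof
    fix w assume "w \<in> {w. tmul f g w \<noteq> 0}"
    then obtain i where "f (take i w) * g (drop i w) \<noteq> 0" unfolding tmul_def
      by (auto elim: sum.not_neutral_contains_not_neutral)
    then show "w \<in> (\<lambda>(a,b). a @ b) ` ({w. f w \<noteq> 0} \<times> {w. g w \<noteq> 0})"
      by (auto intro!: image_eqI[where x="(take i w, drop i w)"])
  qed
  then show ?thesis using \<open>fs f\<close> \<open>fs g\<close> unfolding fs_def by (auto intro: finite_subset)
qed

lemma fs_tadd: "fs f \<Longrightarrow> fs g \<Longrightarrow> fs (tadd f g)"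
  unfolding fs_def tadd_def by (rule finite_subset[of _ "{w. f w \<noteq> 0} \<union> {w. g w \<noteq> 0}"]) auto
lemma fs_tsmult: "fs f \<Longrightarrow> fs (tsmult c f)"
  unfolding fs_def tsmult_def by (rule finite_subset[of _ "{w. f w \<noteq> 0}"]) auto
lemma fs_tmono: "fs (tmono ws)"
  unfolding fs_def tmono_def by (rule finite_subset[of _ "{ws}"]) auto
lemma fs_zero: "fs (\<lambda>w. 0)" unfolding fs_def by simp
lemma fs_tone: "fs tone" unfolding tone_def by (rule fs_tmono)


typedef nc = "{f::tens. fs f}" morphisms Rep Abs
  by (rule exI[of _ "\<lambda>_. 0"]) (simp add: fs_def)

setup_lifting type_definition_nc

instantiation nc :: ring_1
begin
lift_definition zero_nc :: nc is "\<lambda>w. 0" by (simp add: fs_zero)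
lift_definition one_nc :: nc is tone by (simp add: fs_tone)
lift_definition plus_nc :: "nc \<Rightarrow> nc \<Rightarrow> nc" is tadd by (simp add: fs_tadd)
lift_definition uminus_nc :: "nc \<Rightarrow> nc" is "tsmult (-1)" by (simp add: fs_tsmult)
lift_definition minus_nc :: "nc \<Rightarrow> nc \<Rightarrow> nc" is "\<lambda>f g. tadd f (tsmult (-1) g)"
  by (simp add: fs_tadd fs_tsmult)
lift_definition times_nc :: "nc \<Rightarrow> nc \<Rightarrow> nc" is tmul by (simp add: fs_tmul)
instance
proof
  fix a b c :: nc
  show "a * b * c = a * (b * c)" by transfer (simp add: tmul_assoc)
  show "1 * a = a" by transfer (simp add: tmul_tone_left)
  show "a * 1 = a" by transfer (simp add: tmul_tone_right)
  show "(a + b) * c = a * c + b * c" by transfer (simp add: tmul_tadd_left)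
  show "a * (b + c) = a * b + a * c" by transfer (simp add: tmul_tadd_right)
  show "a + b + c = a + (b + c)" by transfer (simp add: tadd_def add.assoc)
  show "a + b = b + a" by transfer (simp add: tadd_def add.commute)
  show "0 + a = a" by transfer (simp add: tadd_def)
  show "- a + a = 0" by transfer (simp add: tadd_def tsmult_def)
  show "a - b = a + - b" by transfer simp
  show "(0::nc) \<noteq> 1"
  proof transfer
    show "(\<lambda>w. 0) \<noteq> tone" unfolding tone_def tmono_def by (metis zero_neq_one)
  qed
qed
end

lift_definition sc :: "complex \<Rightarrow> nc" is "\<lambda>c. tsmult c tone" by (simp add: fs_tsmult fs_tone)
lift_definition wmono :: "gen list \<Rightarrow> nc" is tmono by (simp add: fs_tmono)

lemma Rep_sc_mult: "Rep (sc c * x) = tsmult c (Rep x)"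
  by (simp add: times_nc.rep_eq sc.rep_eq tmul_tsmult_left tmul_tone_left)
lemma Rep_mult_sc: "Rep (x * sc c) = tsmult c (Rep x)"
  by (simp add: times_nc.rep_eq sc.rep_eq tmul_tsmult_right tmul_tone_right)

lemma sc_comm: "x * sc c = sc c * x"
  by (rule Rep_inject[THEN iffD1]) (simp add: Rep_sc_mult Rep_mult_sc)
lemma sc_left_comm: "x * (sc c * y) = sc c * (x * y)"
  by (metis mult.assoc sc_comm)
lemma sc_mult: "sc c * sc d = sc (c * d)"
  by (rule Rep_inject[THEN iffD1]) (simp add: Rep_sc_mult sc.rep_eq tsmult_def mult.assoc)
lemma sc_mult_assoc: "sc c * (sc d * x) = sc (c * d) * x"
  by (simp add: sc_mult flip: mult.assoc)
lemma sc_add: "sc (c + d) = sc c + sc d"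
  by transfer (simp add: tsmult_def tadd_def distrib_right)
lemma sc_0[simp]: "sc 0 = 0" by transfer (simp add: tsmult_def)
lemma sc_1[simp]: "sc 1 = 1" by transfer (simp add: tsmult_def)
lemma sc_uminus: "sc (- c) = - sc c" by transfer (simp add: tsmult_def)
lemma sc_diff: "sc (c - d) = sc c - sc d" by transfer (simp add: tsmult_def tadd_def algebra_simps)
lemma sc_add_distrib: "sc c * x + sc d * x = sc (c + d) * x" by (simp add: sc_add distrib_right)
lemma mono_append: "wmono (a @ b) = wmono a * wmono b"
  by transfer (simp add: tmono_append)
lemma mono_Nil: "wmono [] = 1" by transfer (simp add: tone_def)

lemma Rep_plus: "Rep (x + y) = tadd (Rep x) (Rep y)" by (simp add: plus_nc.rep_eq)
lemma Rep_times: "Rep (x * y) = tmul (Rep x) (Rep y)" by (simp add: times_nc.rep_eq)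
lemma Rep_zero: "Rep 0 = (\<lambda>w. 0)" by (simp add: zero_nc.rep_eq)
lemma Rep_one: "Rep 1 = tone" by (simp add: one_nc.rep_eq)
lemma Rep_fs: "fs (Rep x)" using Rep by simp

lemma Rep_sum: "finite S \<Longrightarrow> Rep (\<Sum>i\<in>S. f i) = (\<lambda>w. \<Sum>i\<in>S. Rep (f i) w)"
  by (induction S rule: finite_induct) (auto simp: Rep_zero Rep_plus tadd_def)

lemma nc_decomp: "x = (\<Sum>w\<in>{w. Rep x w \<noteq> 0}. sc (Rep x w) * wmono w)"
proof (rule Rep_inject[THEN iffD1], rule ext)
  fix w'
  have fin: "finite {w. Rep x w \<noteq> 0}" using Rep_fs[of x] unfolding fs_def .
  have "(\<Sum>w\<in>{w. Rep x w \<noteq> 0}. Rep (sc (Rep x w) * wmono w) w') =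
        (\<Sum>w\<in>{w. Rep x w \<noteq> 0}. if w' = w then Rep x w else 0)"
    by (intro sum.cong) (auto simp: Rep_sc_mult wmono.rep_eq tsmult_def tmono_def)
  also have "\<dots> = Rep x w'" using fin by (simp add: sum.delta)
  finally show "Rep x w' = Rep (\<Sum>w\<in>{w. Rep x w \<noteq> 0}. sc (Rep x w) * wmono w) w'"
    by (simp add: Rep_sum[OF fin])
qed

lemma nc_induct[case_names zero wmono add]:
  assumes "P 0" "\<And>c ws. P (sc c * wmono ws)" "\<And>x y. P x \<Longrightarrow> P y \<Longrightarrow> P (x + y)"
  shows "P x"
proof -
  have fin: "finite {w. Rep x w \<noteq> 0}" using Rep_fs[of x] unfolding fs_def .
  have "\<And>S. finite S \<Longrightarrow> P (\<Sum>w\<in>S. sc (Rep x w) * wmono w)"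
  proof -
    fix S :: "gen list set" assume "finite S"
    then show "P (\<Sum>w\<in>S. sc (Rep x w) * wmono w)"
      by (induction S rule: finite_induct) (auto intro: assms)
  qed
  from this[OF fin] show ?thesis by (subst nc_decomp) 
qed


definition smul :: "complex \<Rightarrow> nc \<Rightarrow> nc" where "smul c x = sc c * x"

lemma smul_mult_left[simp]: "smul c x * y = smul c (x * y)" by (simp add: smul_def mult.assoc)
lemma smul_mult_right[simp]: "x * smul c y = smul c (x * y)" by (simp add: smul_def sc_left_comm)
lemma smul_smul[simp]: "smul c (smul d x) = smul (c * d) x" by (simp add: smul_def sc_mult_assoc)
lemma smul_add: "smul c (x + y) = smul c x + smul c y" by (simp add: smul_def distrib_left)
lemma smul_diff: "smul c (x - y) = smul c x - smul c y" by (simp add: smul_def right_diff_distrib)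
lemma smul_uminus: "smul c (- x) = smul (-c) x" by (simp add: smul_def sc_uminus)
lemma smul_one[simp]: "smul 1 x = x" by (simp add: smul_def)
lemma smul_zero[simp]: "smul 0 x = 0" by (simp add: smul_def)
lemma smul_zero_right[simp]: "smul c 0 = 0" by (simp add: smul_def)
lemma smul_combine: "smul c x + smul d x = smul (c + d) x" by (simp add: smul_def sc_add distrib_right)
lemma Rep_smul: "Rep (smul c x) = tsmult c (Rep x)" by (simp add: smul_def Rep_sc_mult)
lemma sc_smul: "sc c = smul c 1" by (simp add: smul_def)

lemma lin_eq: "finite S \<Longrightarrow> {w. f w \<noteq> 0} \<subseteq> S \<Longrightarrow> lin T f = (\<lambda>w'. \<Sum>w\<in>S. f w * T w w')"
  unfolding lin_def by (intro ext sum.mono_neutral_left) auto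

lemma fs_lin: assumes "fs f" "\<And>w. fs (T w)" shows "fs (lin T f)"
proof -
  have fin: "finite {w. f w \<noteq> 0}" using assms(1) unfolding fs_def .
  have "{w'. lin T f w' \<noteq> 0} \<subseteq> (\<Union>w\<in>{w. f w \<noteq> 0}. {w'. T w w' \<noteq> 0})"
  proof
    fix w' assume "w' \<in> {w'. lin T f w' \<noteq> 0}"
    then have "(\<Sum>w\<in>{w. f w \<noteq> 0}. f w * T w w') \<noteq> 0" unfolding lin_def by simp
    then obtain w where "w \<in> {w. f w \<noteq> 0}" "f w * T w w' \<noteq> 0"
      by (rule sum.not_neutral_contains_not_neutral)
    then show "w' \<in> (\<Union>w\<in>{w. f w \<noteq> 0}. {w'. T w w' \<noteq> 0})" by auto
  qed
  moreover have "finite (\<Union>w\<in>{w. f w \<noteq> 0}. {w'. T w w' \<noteq> 0})"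
    using fin assms(2) unfolding fs_def by auto
  ultimately show ?thesis unfolding fs_def by (rule finite_subset)
qed

definition LO :: "(gen list \<Rightarrow> tens) \<Rightarrow> nc \<Rightarrow> nc" where "LO T x = Abs (lin T (Rep x))"

lemma Rep_LO: "(\<And>w. fs (T w)) \<Longrightarrow> Rep (LO T x) = lin T (Rep x)"
  unfolding LO_def by (rule Abs_inverse) (simp add: fs_lin Rep_fs)

lemma LO_add: assumes "\<And>w. fs (T w)" shows "LO T (x + y) = LO T x + LO T y"
proof (rule Rep_inject[THEN iffD1])
  let ?S = "{w. Rep x w \<noteq> 0} \<union> {w. Rep y w \<noteq> 0}"
  have fin: "finite ?S" using Rep_fs[of x] Rep_fs[of y] unfolding fs_def by auto
  have e1: "lin T (Rep x) = (\<lambda>w'. \<Sum>w\<in>?S. Rep x w * T w w')" by (rule lin_eq[OF fin]) auto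
  have e2: "lin T (Rep y) = (\<lambda>w'. \<Sum>w\<in>?S. Rep y w * T w w')" by (rule lin_eq[OF fin]) auto
  have e3: "lin T (tadd (Rep x) (Rep y)) = (\<lambda>w'. \<Sum>w\<in>?S. tadd (Rep x) (Rep y) w * T w w')"
    by (rule lin_eq[OF fin]) (auto simp: tadd_def)
  show "Rep (LO T (x + y)) = Rep (LO T x + LO T y)"
    unfolding Rep_plus Rep_LO[OF assms] e1 e2 e3 by (simp add: tadd_def sum.distrib distrib_right)
qed

lemma LO_smul: assumes "\<And>w. fs (T w)" shows "LO T (smul c x) = smul c (LO T x)"
proof (rule Rep_inject[THEN iffD1])
  let ?S = "{w. Rep x w \<noteq> 0}"
  have fin: "finite ?S" using Rep_fs[of x] unfolding fs_def by auto
  have e1: "lin T (Rep x) = (\<lambda>w'. \<Sum>w\<in>?S. Rep x w * T w w')" by (rule lin_eq[OF fin]) auto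
  have e3: "lin T (tsmult c (Rep x)) = (\<lambda>w'. \<Sum>w\<in>?S. tsmult c (Rep x) w * T w w')"
    by (rule lin_eq[OF fin]) (auto simp: tsmult_def)
  show "Rep (LO T (smul c x)) = Rep (smul c (LO T x))"
    unfolding Rep_smul Rep_LO[OF assms] e1 e3 by (simp add: tsmult_def sum_distrib_left mult.assoc)
qed

lemma LO_mono: assumes "\<And>w. fs (T w)" shows "LO T (wmono ws) = Abs (T ws)"
proof -
  have "lin T (tmono ws) = (\<lambda>w'. \<Sum>w\<in>{ws}. tmono ws w * T w w')"
    by (rule lin_eq) (auto simp: tmono_def)
  then show ?thesis unfolding LO_def by (simp add: wmono.rep_eq tmono_def)
qed

lemma LO_zero: assumes "\<And>w. fs (T w)" shows "LO T 0 = 0"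
  using LO_smul[of T 0 0, OF assms] by simp

lemma LO_diff: assumes "\<And>w. fs (T w)" shows "LO T (x - y) = LO T x - LO T y"
proof -
  have "x - y = x + smul (-1) y" by (simp add: smul_def sc_uminus)
  then show ?thesis using LO_add[of T x "smul (-1) y", OF assms] LO_smul[of T "-1" y, OF assms]
    by (simp add: smul_def sc_uminus)
qed

lemma LO_sum: assumes "\<And>w. fs (T w)" shows "finite S \<Longrightarrow> LO T (\<Sum>i\<in>S. f i) = (\<Sum>i\<in>S. LO T (f i))"
  by (induction S rule: finite_induct) (auto simp: LO_zero[OF assms] LO_add[OF assms])

definition homt :: "int \<Rightarrow> tens \<Rightarrow> bool" where "homt d f \<longleftrightarrow> (\<forall>w. f w \<noteq> 0 \<longrightarrow> wtw w = d)"
definition hom :: "int \<Rightarrow> nc \<Rightarrow> bool" where "hom d x \<longleftrightarrow> homt d (Rep x)"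

lemma wtw_append[simp]: "wtw (a @ b) = wtw a + wtw b" by (simp add: wtw_def)
lemma wtw_Cons[simp]: "wtw (x # xs) = wt x + wtw xs" by (simp add: wtw_def)
lemma wtw_Nil[simp]: "wtw [] = 0" by (simp add: wtw_def)

lemma homt_tmul: "homt d1 f \<Longrightarrow> homt d2 g \<Longrightarrow> homt (d1 + d2) (tmul f g)"
  unfolding homt_def tmul_def
  by (auto elim!: sum.not_neutral_contains_not_neutral) (metis append_take_drop_id wtw_append)
lemma homt_tadd: "homt d f \<Longrightarrow> homt d g \<Longrightarrow> homt d (tadd f g)"
  unfolding homt_def tadd_def by (metis add.left_neutral)
lemma homt_tsmult: "homt d f \<Longrightarrow> homt d (tsmult c f)"
  unfolding homt_def tsmult_def by auto
lemma homt_tmono: "homt (wtw ws) (tmono ws)" unfolding homt_def tmono_def by auto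
lemma homt_zero: "homt d (\<lambda>w. 0)" unfolding homt_def by auto

lemma hom_mult: "hom d1 x \<Longrightarrow> hom d2 y \<Longrightarrow> hom (d1 + d2) (x * y)"
  unfolding hom_def by (simp add: Rep_times homt_tmul)
lemma hom_add: "hom d x \<Longrightarrow> hom d y \<Longrightarrow> hom d (x + y)"
  unfolding hom_def by (simp add: Rep_plus homt_tadd)
lemma hom_smul: "hom d x \<Longrightarrow> hom d (smul c x)"
  unfolding hom_def by (simp add: Rep_smul homt_tsmult)
lemma hom_mono: "hom (wtw ws) (wmono ws)" unfolding hom_def by (simp add: wmono.rep_eq homt_tmono)
lemma hom_zero: "hom d 0" unfolding hom_def by (simp add: Rep_zero homt_zero)
lemma hom_one: "hom 0 1" using hom_mono[of "[]"] by (simp add: mono_Nil)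
lemma hom_sc: "hom 0 (sc c)" using hom_smul[OF hom_one, of c] by (simp add: smul_def)
lemma hom_uminus: "hom d x \<Longrightarrow> hom d (- x)"
  using hom_smul[of d x "-1"] by (simp add: smul_def sc_uminus)
lemma hom_diff: "hom d x \<Longrightarrow> hom d y \<Longrightarrow> hom d (x - y)"
  using hom_add[of d x "- y"] hom_uminus by simp
lemma hom_power: "hom 0 x \<Longrightarrow> hom 0 (x ^ n)"
  by (induction n) (auto simp: hom_one dest: hom_mult)

lemma homt_lin: assumes "\<And>w. f w \<noteq> 0 \<Longrightarrow> homt (wtw w + e) (T w)" "homt d f"
  shows "homt (d + e) (lin T f)"
  using assms unfolding homt_def lin_def
  by (auto elim!: sum.not_neutral_contains_not_neutral)

lemma hom_LO: assumes "\<And>w. fs (T w)" "\<And>w. homt (wtw w + e) (T w)" "hom d x"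
  shows "hom (d + e) (LO T x)"
  using assms unfolding hom_def by (simp add: Rep_LO homt_lin)

definition DG :: "(int \<Rightarrow> complex) \<Rightarrow> gen list \<Rightarrow> tens" where
  "DG \<phi> ws = tsmult (\<phi> (wtw ws)) (tmono ws)"

lemma fs_DG: "fs (DG \<phi> ws)" unfolding DG_def by (simp add: fs_tsmult fs_tmono)

lemma LO_DG_hom: assumes "hom d x" shows "LO (DG \<phi>) x = smul (\<phi> d) x"
proof (rule Rep_inject[THEN iffD1], rule ext)
  fix w'
  let ?S = "{w. Rep x w \<noteq> 0}"
  have fin: "finite ?S" using Rep_fs[of x] unfolding fs_def by auto
  have e1: "lin (DG \<phi>) (Rep x) = (\<lambda>w'. \<Sum>w\<in>?S. Rep x w * DG \<phi> w w')" by (rule lin_eq[OF fin]) auto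
  have "(\<Sum>w\<in>?S. Rep x w * DG \<phi> w w') = (\<Sum>w\<in>?S. if w' = w then Rep x w * \<phi> (wtw w) else 0)"
    by (intro sum.cong) (auto simp: DG_def tsmult_def tmono_def)
  also have "\<dots> = \<phi> d * Rep x w'" using fin assms unfolding hom_def homt_def by (auto simp: sum.delta)
  finally show "Rep (LO (DG \<phi>) x) w' = Rep (smul (\<phi> d) x) w'"
    by (simp add: Rep_LO fs_DG e1 Rep_smul tsmult_def)
qed


lemma nc_induct'[case_names zero wmono add]:
  assumes "P 0" "\<And>c ws. P (smul c (wmono ws))" "\<And>x y. P x \<Longrightarrow> P y \<Longrightarrow> P (x + y)"
  shows "P x"
  by (rule nc_induct) (auto intro: assms simp: smul_def[symmetric])

fun wordZ :: "complex \<Rightarrow> (gen \<Rightarrow> tens) \<Rightarrow> gen list \<Rightarrow> tens" where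
  "wordZ q g [] = (\<lambda>w. 0)"
| "wordZ q g (x # xs) =
     tadd (tsmult (q powi (- wt x)) (tmul (tmono [x]) (wordZ q g xs)))
          (tsmult (q powi (wtw xs)) (tmul (g x) (tmono xs)))"

lemma wordX_Z: "wordX q ws = wordZ q (genX q) ws" by (induction ws) auto
lemma wordY_Z: "wordY q ws = wordZ q (genY q) ws" by (induction ws) auto

definition ZZ :: "complex \<Rightarrow> (gen \<Rightarrow> tens) \<Rightarrow> nc \<Rightarrow> nc" where "ZZ q g = LO (wordZ q g)"
definition Em :: "complex \<Rightarrow> nc \<Rightarrow> nc" where "Em q = LO (DG (\<lambda>d. q powi (- d)))"
definition Ep :: "complex \<Rightarrow> nc \<Rightarrow> nc" where "Ep q = LO (DG (\<lambda>d. q powi d))"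

lemma homt_eq: "homt d f \<Longrightarrow> d = d' \<Longrightarrow> homt d' f" by simp

lemma Abs_DG: "Abs (DG \<phi> ws) = smul (\<phi> (wtw ws)) (wmono ws)"
  by (rule Rep_inject[THEN iffD1]) (simp add: DG_def Abs_inverse fs_tsmult fs_tmono Rep_smul wmono.rep_eq)

lemma LO_DG_smul_mono: "LO (DG \<phi>) (smul c (wmono ws)) = smul c (smul (\<phi> (wtw ws)) (wmono ws))"
  by (simp add: LO_smul fs_DG LO_mono Abs_DG)

locale qg =
  fixes q :: complex and g :: "gen \<Rightarrow> tens" and e :: int
  assumes q0: "q \<noteq> 0" and fsg: "\<And>x. fs (g x)" and homg: "\<And>x. homt (wt x + e) (g x)"
begin

lemma fs_wordZ: "fs (wordZ q g ws)"
  by (induction ws) (auto simp: fs_zero fs_tadd fs_tsmult fs_tmul fs_tmono fsg)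

lemma homt_wordZ: "homt (wtw ws + e) (wordZ q g ws)"
proof (induction ws)
  case Nil then show ?case by (simp add: homt_zero)
next
  case (Cons x xs)
  have a: "homt (wt x + (wtw xs + e)) (tmul (tmono [x]) (wordZ q g xs))"
    using homt_tmul[OF homt_tmono[of "[x]"] Cons.IH] by simp
  have b: "homt ((wt x + e) + wtw xs) (tmul (g x) (tmono xs))"
    using homt_tmul[OF homg homt_tmono] by simp
  have a': "homt (wtw (x # xs) + e) (tmul (tmono [x]) (wordZ q g xs))"
    by (rule homt_eq[OF a]) simp
  have b': "homt (wtw (x # xs) + e) (tmul (g x) (tmono xs))"
    by (rule homt_eq[OF b]) simp
  show ?case
    unfolding wordZ.simps by (intro homt_tadd homt_tsmult a' b')
qed

definition WZ where "WZ ws = Abs (wordZ q g ws)"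
definition GZ where "GZ x = Abs (g x)"

lemma Rep_WZ: "Rep (WZ ws) = wordZ q g ws" unfolding WZ_def by (simp add: Abs_inverse fs_wordZ)
lemma Rep_GZ: "Rep (GZ x) = g x" unfolding GZ_def by (simp add: Abs_inverse fsg)

lemma WZ_Nil: "WZ [] = 0" by (rule Rep_inject[THEN iffD1]) (simp add: Rep_WZ Rep_zero)

lemma WZ_Cons: "WZ (x # xs) = smul (q powi (- wt x)) (wmono [x] * WZ xs) + smul (q powi (wtw xs)) (GZ x * wmono xs)"
  by (rule Rep_inject[THEN iffD1]) (simp add: Rep_WZ Rep_plus Rep_smul Rep_times wmono.rep_eq Rep_GZ)

lemma WZ_append: "WZ (a @ b) = smul (q powi (- wtw a)) (wmono a * WZ b) + smul (q powi (wtw b)) (WZ a * wmono b)"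
proof (induction a)
  case Nil then show ?case by (simp add: WZ_Nil mono_Nil)
next
  case (Cons x a)
  have m: "wmono (x # a) = wmono [x] * wmono a" using mono_append[of "[x]" a] by simp
  show ?case
    by (simp add: WZ_Cons Cons.IH m mono_append smul_add distrib_left distrib_right mult.assoc
        power_int_add power_int_diff q0 algebra_simps power_int_minus divide_inverse)
qed

lemma ZZ_fs: "\<And>w. fs (wordZ q g w)" by (rule fs_wordZ)

lemma ZZ_add: "ZZ q g (x + y) = ZZ q g x + ZZ q g y" unfolding ZZ_def by (rule LO_add[OF ZZ_fs])
lemma ZZ_smul: "ZZ q g (smul c x) = smul c (ZZ q g x)" unfolding ZZ_def by (rule LO_smul[OF ZZ_fs])
lemma ZZ_zero: "ZZ q g 0 = 0" unfolding ZZ_def by (rule LO_zero[OF ZZ_fs])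
lemma ZZ_diff: "ZZ q g (x - y) = ZZ q g x - ZZ q g y" unfolding ZZ_def by (rule LO_diff[OF ZZ_fs])
lemma ZZ_mono: "ZZ q g (wmono ws) = WZ ws" unfolding ZZ_def WZ_def by (rule LO_mono[OF ZZ_fs])
lemma hom_ZZ: "hom d x \<Longrightarrow> hom (d + e) (ZZ q g x)"
  unfolding ZZ_def by (rule hom_LO[OF ZZ_fs homt_wordZ])

lemma ZZ_gen: "ZZ q g (wmono [x]) = GZ x"
  by (simp add: ZZ_mono WZ_Cons WZ_Nil mono_Nil)
lemma ZZ_one: "ZZ q g 1 = 0"
  using ZZ_mono[of "[]"] by (simp add: mono_Nil WZ_Nil)
lemma ZZ_sc: "ZZ q g (sc c) = 0"
  using ZZ_smul[of c 1] by (simp add: ZZ_one smul_def)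

lemma Em_add: "Em q (x + y) = Em q x + Em q y" unfolding Em_def by (rule LO_add[OF fs_DG])
lemma Ep_add: "Ep q (x + y) = Ep q x + Ep q y" unfolding Ep_def by (rule LO_add[OF fs_DG])
lemma Em_zero: "Em q 0 = 0" unfolding Em_def by (rule LO_zero[OF fs_DG])
lemma Ep_zero: "Ep q 0 = 0" unfolding Ep_def by (rule LO_zero[OF fs_DG])

lemma ZZ_leibniz: "ZZ q g (x * y) = Em q x * ZZ q g y + ZZ q g x * Ep q y"
proof (induction x arbitrary: y rule: nc_induct')
  case zero then show ?case by (simp add: ZZ_zero Em_zero)
next
  case (add x1 x2) then show ?case by (simp add: distrib_right ZZ_add Em_add)
next
  case (wmono c a)
  show ?case
  proof (induction y rule: nc_induct')
    case zero then show ?case by (simp add: ZZ_zero Ep_zero)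
  next
    case (add y1 y2) then show ?case by (simp add: distrib_left ZZ_add Ep_add)
  next
    case (wmono d b)
    show ?case
      by (simp add: Em_def Ep_def LO_DG_smul_mono ZZ_smul ZZ_mono flip: mono_append)
         (simp add: WZ_append smul_add mult_ac)
  qed
qed

end


lemma ideal_fs: "f \<in> ideal q h c \<Longrightarrow> fs f"
proof (induction rule: ideal.induct)
  case zero then show ?case by (simp add: fs_zero)
next
  case (gen r a b)
  have "fs r" using gen unfolding rels_def rel1_def rel2_def rel3_def rel4_def
    by (auto simp: fs_tadd fs_tsmult fs_tmono fs_tone)
  then show ?case by (simp add: fs_tmul fs_tmono)
next
  case (add x y) then show ?case by (simp add: fs_tadd)
next
  case (smult x d) then show ?case by (simp add: fs_tsmult)
qed

lemma ideal_left: "f \<in> ideal q h c \<Longrightarrow> tmul (tmono ws) f \<in> ideal q h c"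
proof (induction rule: ideal.induct)
  case zero then show ?case by (simp add: tmul_zero_right ideal.zero)
next
  case (gen r a b)
  then show ?case using ideal.gen[OF gen, of "ws @ a" b]
    by (simp add: tmul_assoc[symmetric] tmono_append)
next
  case (add x y) then show ?case by (simp add: tmul_tadd_right ideal.add)
next
  case (smult x d) then show ?case by (simp add: tmul_tsmult_right ideal.smult)
qed

lemma ideal_right: "f \<in> ideal q h c \<Longrightarrow> tmul f (tmono ws) \<in> ideal q h c"
proof (induction rule: ideal.induct)
  case zero then show ?case by (simp add: tmul_zero_left ideal.zero)
next
  case (gen r a b)
  then show ?case using ideal.gen[OF gen, of a "b @ ws"]
    by (simp add: tmul_assoc tmono_append[symmetric])
next
  case (add x y) then show ?case by (simp add: tmul_tadd_left ideal.add)
next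
  case (smult x d) then show ?case by (simp add: tmul_tsmult_left ideal.smult)
qed

lemma ideal_rel: "r \<in> rels q h c \<Longrightarrow> r \<in> ideal q h c"
  using ideal.gen[of r q h c "[]" "[]"] by (simp add: tone_def[symmetric] tmul_tone_left tmul_tone_right)

definition II :: "complex \<Rightarrow> complex \<Rightarrow> complex \<Rightarrow> nc set" where
  "II q h c = {x. Rep x \<in> ideal q h c}"

lemma II_zero: "0 \<in> II q h c" unfolding II_def by (simp add: Rep_zero ideal.zero)
lemma II_add: "x \<in> II q h c \<Longrightarrow> y \<in> II q h c \<Longrightarrow> x + y \<in> II q h c"
  unfolding II_def by (simp add: Rep_plus ideal.add)
lemma II_smul: "x \<in> II q h c \<Longrightarrow> smul d x \<in> II q h c"
  unfolding II_def by (simp add: Rep_smul ideal.smult)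
lemma II_uminus: "x \<in> II q h c \<Longrightarrow> - x \<in> II q h c"
  using II_smul[of x q h c "-1"] by (simp add: smul_def sc_uminus)
lemma II_diff: "x \<in> II q h c \<Longrightarrow> y \<in> II q h c \<Longrightarrow> x - y \<in> II q h c"
  using II_add[of x q h c "- y"] II_uminus by simp

lemma II_left: assumes "x \<in> II q h c" shows "y * x \<in> II q h c"
proof (induction y rule: nc_induct')
  case zero then show ?case by (simp add: II_zero)
next
  case (wmono d ws)
  have "Rep (wmono ws * x) \<in> ideal q h c" using assms unfolding II_def
    by (simp add: Rep_times wmono.rep_eq ideal_left)
  then show ?case using II_smul[of "wmono ws * x" q h c d] unfolding II_def by simp
next
  case (add y1 y2) then show ?case by (simp add: distrib_right II_add)
qed

lemma II_right: assumes "x \<in> II q h c" shows "x * y \<in> II q h c"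
proof (induction y rule: nc_induct')
  case zero then show ?case by (simp add: II_zero)
next
  case (wmono d ws)
  have "Rep (x * wmono ws) \<in> ideal q h c" using assms unfolding II_def
    by (simp add: Rep_times wmono.rep_eq ideal_right)
  then show ?case using II_smul[of "x * wmono ws" q h c d] unfolding II_def by simp
next
  case (add y1 y2) then show ?case by (simp add: distrib_left II_add)
qed

definition eqv :: "complex \<Rightarrow> complex \<Rightarrow> complex \<Rightarrow> nc \<Rightarrow> nc \<Rightarrow> bool" where
  "eqv q h c x y \<longleftrightarrow> x - y \<in> II q h c"

lemma eqv_refl: "eqv q h c x x" unfolding eqv_def by (simp add: II_zero)
lemma eqv_sym: "eqv q h c x y \<Longrightarrow> eqv q h c y x"
  unfolding eqv_def using II_uminus by fastforce
lemma eqv_trans: "eqv q h c x y \<Longrightarrow> eqv q h c y z \<Longrightarrow> eqv q h c x z"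
  unfolding eqv_def using II_add by fastforce
lemma eqv_add: "eqv q h c x y \<Longrightarrow> eqv q h c x' y' \<Longrightarrow> eqv q h c (x + x') (y + y')"
  unfolding eqv_def using II_add by (fastforce simp: algebra_simps)
lemma eqv_smul: "eqv q h c x y \<Longrightarrow> eqv q h c (smul d x) (smul d y)"
  unfolding eqv_def using II_smul by (fastforce simp: smul_diff[symmetric])
lemma eqv_left: "eqv q h c x y \<Longrightarrow> eqv q h c (z * x) (z * y)"
  unfolding eqv_def using II_left by (fastforce simp: right_diff_distrib[symmetric])
lemma eqv_right: "eqv q h c x y \<Longrightarrow> eqv q h c (x * z) (y * z)"
  unfolding eqv_def using II_right by (fastforce simp: left_diff_distrib[symmetric])
lemma eqv_eq: "x = y \<Longrightarrow> eqv q h c x y" by (simp add: eqv_refl)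
lemma eqv_trans_eq: "eqv q h c x y \<Longrightarrow> y = z \<Longrightarrow> eqv q h c x z" by simp
lemma eq_eqv_trans: "x = y \<Longrightarrow> eqv q h c y z \<Longrightarrow> eqv q h c x z" by simp
lemma eqv_sum: "finite S \<Longrightarrow> (\<And>i. i \<in> S \<Longrightarrow> eqv q h c (f i) (g i)) \<Longrightarrow> eqv q h c (\<Sum>i\<in>S. f i) (\<Sum>i\<in>S. g i)"
  by (induction S rule: finite_induct) (auto simp: eqv_refl eqv_add)


definition evp :: "nc \<Rightarrow> complex poly \<Rightarrow> nc" where
  "evp x p = (\<Sum>i\<le>degree p. smul (coeff p i) (x ^ i))"

lemma smul_sum: "smul c (\<Sum>i\<in>S. f i) = (\<Sum>i\<in>S. smul c (f i))"
  by (induction S rule: infinite_finite_induct) (auto simp: smul_add)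

lemma sum_mult_nc: "(\<Sum>i\<in>S. f i) * (y::nc) = (\<Sum>i\<in>S. f i * y)"
  by (rule sum_distrib_right)
lemma mult_sum_nc: "(y::nc) * (\<Sum>i\<in>S. f i) = (\<Sum>i\<in>S. y * f i)"
  by (rule sum_distrib_left)

lemma evp_bound: "degree p \<le> N \<Longrightarrow> evp x p = (\<Sum>i\<le>N. smul (coeff p i) (x ^ i))"
  unfolding evp_def by (rule sum.mono_neutral_left) (auto simp: coeff_eq_0)

lemma evp_add: "evp x (p + r) = evp x p + evp x r"
proof -
  let ?N = "max (degree p) (degree r)"
  have "evp x (p + r) = (\<Sum>i\<le>?N. smul (coeff (p + r) i) (x ^ i))"
    by (rule evp_bound) (simp add: degree_add_le)
  also have "\<dots> = (\<Sum>i\<le>?N. smul (coeff p i) (x ^ i)) + (\<Sum>i\<le>?N. smul (coeff r i) (x ^ i))"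
    by (simp add: sum.distrib[symmetric] smul_combine)
  also have "\<dots> = evp x p + evp x r"
    by (simp add: evp_bound[of p ?N x] evp_bound[of r ?N x])
  finally show ?thesis .
qed

lemma evp_smult: "evp x (smult c p) = smul c (evp x p)"
proof -
  have "evp x (smult c p) = (\<Sum>i\<le>degree p. smul (coeff (smult c p) i) (x ^ i))"
    by (rule evp_bound) (simp add: degree_smult_le)
  then show ?thesis by (simp add: evp_def smul_sum)
qed

lemma evp_0[simp]: "evp x 0 = 0" by (simp add: evp_def)

lemma evp_pCons: "evp x (pCons b p) = smul b 1 + x * evp x p"
proof -
  let ?N = "degree p"
  have "evp x (pCons b p) = (\<Sum>i\<le>Suc ?N. smul (coeff (pCons b p) i) (x ^ i))"
    by (rule evp_bound) (simp add: degree_pCons_le)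
  also have "\<dots> = smul b 1 + (\<Sum>i\<le>?N. smul (coeff p i) (x ^ Suc i))"
    by (simp only: sum.atMost_Suc_shift) simp
  also have "(\<Sum>i\<le>?N. smul (coeff p i) (x ^ Suc i)) = x * evp x p"
    by (simp add: evp_def mult_sum_nc)
  finally show ?thesis .
qed

lemma evp_mult: "evp x (p * r) = evp x p * evp x r"
proof (induction p rule: pCons_induct)
  case 0 then show ?case by simp
next
  case (pCons b p)
  show ?case
    by (simp add: evp_add evp_smult evp_pCons pCons.IH distrib_right smul_def mult.assoc)
qed

lemma evp_const: "evp x [:b:] = smul b 1"
  using evp_pCons[of x b 0] by simp

lemma evp_X: "evp x [:0, 1:] = x"
  using evp_pCons[of x 0 "[:1:]"] by (simp add: evp_const)

lemma evp_monom: "evp x (monom b n) = smul b (x ^ n)"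
proof -
  have "evp x (monom b n) = (\<Sum>i\<le>n. smul (coeff (monom b n) i) (x ^ i))"
    by (rule evp_bound) (simp add: degree_monom_le)
  also have "\<dots> = (\<Sum>i\<le>n. if i = n then smul b (x ^ n) else 0)"
    by (intro sum.cong) auto
  finally show ?thesis by simp
qed

lemma evp_diff: "evp x (p - r) = evp x p - evp x r"
  using evp_add[of x "p - r" r] by simp

lemma evp_sum: "finite S \<Longrightarrow> evp x (\<Sum>i\<in>S. f i) = (\<Sum>i\<in>S. evp x (f i))"
  by (induction S rule: finite_induct) (auto simp: evp_add)


definition "uu = wmono [U]"
definition "vv = wmono [V]"
definition "ww = wmono [W]"
definition aa :: "complex \<Rightarrow> complex \<Rightarrow> complex" where "aa q h = h / (1 - q^2)"
definition tt :: "complex \<Rightarrow> complex \<Rightarrow> nc" where "tt q h = vv + smul (- aa q h) 1"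

lemma nc_ext: "(\<And>w. Rep x w = Rep y w) \<Longrightarrow> x = y"
  by (rule Rep_inject[THEN iffD1]) auto

lemmas Rep_simps = Rep_plus minus_nc.rep_eq Rep_smul Rep_one wmono.rep_eq tadd_def tsmult_def tmono_def tone_def
  uminus_nc.rep_eq Rep_zero

locale main =
  fixes q h c :: complex
  assumes gq: "generic_q q"
begin

lemma q0: "q \<noteq> 0" using gq unfolding generic_q_def by auto
lemma qpow: "n > 0 \<Longrightarrow> q ^ n \<noteq> 1" using gq unfolding generic_q_def by auto
lemma Q1: "q^2 \<noteq> 1" using qpow[of 2] by simp
lemma Q1': "1 - q^2 \<noteq> 0" using Q1 by simp
lemma s0: "q^2 + 1 \<noteq> 0"
proof
  assume "q^2 + 1 = 0"
  then have "q^2 = -1" by (simp add: eq_neg_iff_add_eq_0)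
  then have "q^4 = 1" by (metis power_mult_distrib[of q q 2] power2_eq_square mult.commute
     numeral_Bit0 power_add power_minus1_even power_one mult_2 power_even_eq semiring_norm(2))
  then show False using qpow[of 4] by simp
qed

lemma ah: "aa q h * (1 - q^2) = h" unfolding aa_def using Q1' by simp

definition "r1 = smul (q^2+1) (wmono [U,W]) + (wmono [V,V] + (smul ((q^2+1)/q^2) (wmono [W,U]) + smul (-c) 1))"
definition "r2 = smul (q^2) (wmono [U,V]) + (smul (-1) (wmono [V,U]) + smul h (wmono [U]))"
definition "r3 = smul (q^2+1) (wmono [U,W] + smul (-1) (wmono [W,U])) + (smul (1-q^2) (wmono [V,V]) + smul (-h) (wmono [V]))"
definition "r4 = smul (- (q^2)) (wmono [V,W]) + (wmono [W,V] + smul (-h) (wmono [W]))"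

lemma r1_II: "r1 \<in> II q h c"
proof -
  have "Rep r1 = rel1 q h c" unfolding r1_def rel1_def by (simp add: Rep_plus Rep_smul Rep_one wmono.rep_eq tone_def)
  then show ?thesis unfolding II_def by (simp add: ideal_rel rels_def)
qed
lemma r2_II: "r2 \<in> II q h c"
proof -
  have "Rep r2 = rel2 q h c" unfolding r2_def rel2_def by (simp add: Rep_plus Rep_smul Rep_one wmono.rep_eq tone_def)
  then show ?thesis unfolding II_def by (simp add: ideal_rel rels_def)
qed
lemma r3_II: "r3 \<in> II q h c"
proof -
  have "Rep r3 = rel3 q h c" unfolding r3_def rel3_def by (simp add: Rep_plus Rep_smul Rep_one wmono.rep_eq tone_def)
  then show ?thesis unfolding II_def by (simp add: ideal_rel rels_def)
qed
lemma r4_II: "r4 \<in> II q h c"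
proof -
  have "Rep r4 = rel4 q h c" unfolding r4_def rel4_def by (simp add: Rep_plus Rep_smul Rep_one wmono.rep_eq tone_def)
  then show ?thesis unfolding II_def by (simp add: ideal_rel rels_def)
qed

abbreviation "t \<equiv> tt q h"
abbreviation "a \<equiv> aa q h"
abbreviation "E \<equiv> eqv q h c"

lemma R2: "E (uu * t) (smul (inverse (q^2)) (t * uu))"
proof -
  have "uu * t - smul (inverse (q^2)) (t * uu) = smul (inverse (q^2)) r2"
  proof (rule nc_ext)
    fix w
    show "Rep (uu * t - smul (inverse (q^2)) (t * uu)) w = Rep (smul (inverse (q^2)) r2) w"
      unfolding r2_def tt_def uu_def vv_def
      using ah q0
      by (simp add: algebra_simps smul_add smul_diff flip: mono_append)
         (simp add: Rep_simps split: if_split, auto simp: field_simps)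
  qed
  then show ?thesis unfolding eqv_def using II_smul[OF r2_II] by simp
qed


lemma R4: "E (ww * t) (smul (q^2) (t * ww))"
proof -
  have "ww * t - smul (q^2) (t * ww) = r4"
  proof (rule nc_ext)
    fix w
    show "Rep (ww * t - smul (q^2) (t * ww)) w = Rep r4 w"
      unfolding r4_def tt_def ww_def vv_def
      using ah q0
      by (simp add: algebra_simps smul_add smul_diff flip: mono_append)
         (simp add: Rep_simps split: if_split, auto simp: field_simps)
  qed
  then show ?thesis unfolding eqv_def using r4_II by simp
qed

definition "Fp = [: (q^2*c - a^2 + h*a)/(q^2+1)^2, (h - 2*a)/(q^2+1)^2, -1/(q^2+1)^2 :]"
definition "Gp = [: (q^2*(c - q^2*a^2 - h*a)/(q^2+1)^2), (- (q^2*(2*q^2*a + h)/(q^2+1)^2)), (- (q^4/(q^2+1)^2)) :]"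

lemma evp3: "evp x [:b0, b1, b2:] = smul b0 1 + smul b1 x + smul b2 (x * x)"
  by (simp add: evp_pCons smul_add algebra_simps smul_def sc_comm sc_left_comm)

lemma R1: "E (uu * ww) (evp t Fp)"
proof -
  have "uu * ww - evp t Fp = smul (q^2/(q^2+1)^2) r1 + smul (1/(q^2+1)^2) r3"
  proof (rule nc_ext)
    fix w
    show "Rep (uu * ww - evp t Fp) w = Rep (smul (q^2/(q^2+1)^2) r1 + smul (1/(q^2+1)^2) r3) w"
      unfolding r1_def r3_def tt_def uu_def ww_def vv_def Fp_def evp3
      using ah q0 s0
      apply (simp add: algebra_simps smul_add smul_diff flip: mono_append)
      apply (simp add: Rep_simps split: if_split)
      apply (intro conjI impI)
      apply (simp_all add: field_simps)
      apply (simp_all add: eval_nat_numeral algebra_simps)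
      done
  qed
  then show ?thesis unfolding eqv_def using II_add[OF II_smul[OF r1_II] II_smul[OF r3_II]] by simp
qed

lemma R3: "E (ww * uu) (evp t Gp)"
proof -
  have "ww * uu - evp t Gp = smul (q^2/(q^2+1)^2) r1 + smul (- (q^2/(q^2+1)^2)) r3"
  proof (rule nc_ext)
    fix w
    show "Rep (ww * uu - evp t Gp) w = Rep (smul (q^2/(q^2+1)^2) r1 + smul (- (q^2/(q^2+1)^2)) r3) w"
      unfolding r1_def r3_def tt_def uu_def ww_def vv_def Gp_def evp3
      using ah q0 s0
      apply (simp add: algebra_simps smul_add smul_diff flip: mono_append)
      apply (simp add: Rep_simps split: if_split)
      apply (intro conjI impI)
      apply (simp_all add: field_simps)
      apply (simp_all add: eval_nat_numeral algebra_simps)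
      done
  qed
  then show ?thesis unfolding eqv_def using II_add[OF II_smul[OF r1_II] II_smul[OF r3_II]] by simp
qed

end

context main begin

lemma fs_genX: "fs (genX q x)" by (cases x) (auto simp: fs_zero fs_tsmult fs_tmono)
lemma fs_genY: "fs (genY q x)" by (cases x) (auto simp: fs_zero fs_tsmult fs_tmono)
lemma homt_genX: "homt (wt x + 1) (genX q x)"
  by (cases x) (auto simp: homt_zero intro!: homt_tsmult homt_eq[OF homt_tmono])
lemma homt_genY: "homt (wt x - 1) (genY q x)"
  by (cases x) (auto simp: homt_zero intro!: homt_tsmult homt_eq[OF homt_tmono])

sublocale X: qg q "genX q" 1 by unfold_locales (auto simp: q0 fs_genX homt_genX)
sublocale Y: qg q "genY q" "-1" by unfold_locales (auto simp: q0 fs_genY homt_genY)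

abbreviation "XX \<equiv> ZZ q (genX q)"
abbreviation "YY \<equiv> ZZ q (genY q)"
definition "EE = LO (DG (\<lambda>d. q powi (2 * d) + q powi (- 2 * d) - 2))"
definition "KK x = smul (q/2) (XX (YY x) + YY (XX x)) + smul (q^2*(1+q^2)/(2*(1-q^2)^2)) (EE x)"
abbreviation "c1 \<equiv> q + inverse q"

lemma Abs_tsmult_mono: "Abs (tsmult b (tmono ws)) = smul b (wmono ws)"
  by (rule Rep_inject[THEN iffD1]) (simp add: Abs_inverse fs_tsmult fs_tmono Rep_smul wmono.rep_eq)
lemma Abs_mono: "Abs (tmono ws) = wmono ws"
  by (rule Rep_inject[THEN iffD1]) (simp add: Abs_inverse fs_tmono wmono.rep_eq)
lemma Abs_0: "Abs (\<lambda>w. 0) = 0"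
  by (rule Rep_inject[THEN iffD1]) (simp add: Abs_inverse fs_zero Rep_zero)

lemma XX_u: "XX uu = 0" unfolding uu_def by (simp add: X.ZZ_gen X.GZ_def Abs_0)
lemma XX_v: "XX vv = smul (- c1) uu" unfolding uu_def vv_def by (simp add: X.ZZ_gen X.GZ_def Abs_tsmult_mono)
lemma XX_w: "XX ww = vv" unfolding ww_def vv_def by (simp add: X.ZZ_gen X.GZ_def Abs_mono)
lemma YY_u: "YY uu = smul (-1) vv" unfolding uu_def vv_def by (simp add: Y.ZZ_gen Y.GZ_def Abs_tsmult_mono)
lemma YY_v: "YY vv = smul c1 ww" unfolding ww_def vv_def by (simp add: Y.ZZ_gen Y.GZ_def Abs_tsmult_mono)
lemma YY_w: "YY ww = 0" unfolding ww_def by (simp add: Y.ZZ_gen Y.GZ_def Abs_0)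

lemma XX_t: "XX t = smul (- c1) uu"
  unfolding tt_def by (simp add: X.ZZ_add X.ZZ_smul X.ZZ_one XX_v)
lemma YY_t: "YY t = smul c1 ww"
  unfolding tt_def by (simp add: Y.ZZ_add Y.ZZ_smul Y.ZZ_one YY_v)

lemma hom_u: "hom 1 uu" unfolding uu_def using hom_mono[of "[U]"] by simp
lemma hom_v: "hom 0 vv" unfolding vv_def using hom_mono[of "[V]"] by simp
lemma hom_w: "hom (-1) ww" unfolding ww_def using hom_mono[of "[W]"] by simp
lemma hom_t: "hom 0 t" unfolding tt_def by (intro hom_add hom_v hom_smul hom_one)
lemma hom_tpow: "hom 0 (t ^ n)" by (rule hom_power[OF hom_t])

lemma Em_hom: "hom d x \<Longrightarrow> Em q x = smul (q powi (- d)) x"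
  unfolding Em_def by (rule LO_DG_hom)
lemma Ep_hom: "hom d x \<Longrightarrow> Ep q x = smul (q powi d) x"
  unfolding Ep_def by (rule LO_DG_hom)
lemma EE_hom0: "hom 0 x \<Longrightarrow> EE x = 0"
  unfolding EE_def by (subst LO_DG_hom) auto

lemma Em_t: "Em q t = t" using Em_hom[OF hom_t] by simp
lemma Ep_0: "hom 0 x \<Longrightarrow> Ep q x = x" using Ep_hom[of 0 x] by simp
lemma Em_u: "Em q uu = smul (inverse q) uu" using Em_hom[OF hom_u] by (simp add: power_int_minus)
lemma Em_w: "Em q ww = smul q ww" using Em_hom[OF hom_w] by simp

lemma smul2: "smul (2 * k) A = smul k A + smul k A" by (simp add: smul_combine)

lemma K_rec:
  assumes hx: "hom 0 x"
  shows "KK (t * x) = t * KK x + smul (- c1) (uu * YY x) + smul (c1 * q^2) (ww * XX x) + smul (q * c1) (vv * x)"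
proof -
  have hY: "hom (-1) (YY x)" using Y.hom_ZZ[OF hx] by simp
  have hX: "hom 1 (XX x)" using X.hom_ZZ[OF hx] by simp
  have Xtx: "XX (t * x) = t * XX x + smul (- c1) (uu * x)"
    by (simp add: X.ZZ_leibniz Em_t XX_t Ep_0[OF hx])
  have Ytx: "YY (t * x) = t * YY x + smul c1 (ww * x)"
    by (simp add: Y.ZZ_leibniz Em_t YY_t Ep_0[OF hx])
  have XY: "XX (YY (t * x)) = t * XX (YY x) + (smul (- c1 * inverse q) (uu * YY x) + (smul (c1 * q) (ww * XX x) + smul c1 (vv * x)))"
    by (simp add: Ytx X.ZZ_add X.ZZ_smul X.ZZ_leibniz Em_t XX_t Ep_hom[OF hY] Em_w XX_w Ep_0[OF hx]
        power_int_minus smul_add mult_ac)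
  have YX: "YY (XX (t * x)) = t * YY (XX x) + (smul (c1 * q) (ww * XX x) + (smul (- c1 * inverse q) (uu * YY x) + smul c1 (vv * x)))"
    by (simp add: Xtx Y.ZZ_add Y.ZZ_smul Y.ZZ_leibniz Em_t YY_t Ep_hom[OF hX] Em_u YY_u Ep_0[OF hx]
        smul_add mult_ac add.commute[of "inverse q" q])
  have E1: "EE (t * x) = 0" by (rule EE_hom0) (use hom_mult[OF hom_t hx] in simp)
  have E2: "EE x = 0" by (rule EE_hom0[OF hx])
  have "KK (t * x) = smul (q/2) (t * (XX (YY x) + YY (XX x))) + smul (2 * (q/2)) (smul (- c1 * inverse q) (uu * YY x))
     + smul (2 * (q/2)) (smul (c1 * q) (ww * XX x)) + smul (2 * (q/2)) (smul c1 (vv * x))"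
    unfolding KK_def XY YX E1 smul2 by (simp add: smul_add distrib_left add_ac)
  also have "\<dots> = t * KK x + smul (- c1) (uu * YY x) + smul (c1 * q^2) (ww * XX x) + smul (q * c1) (vv * x)"
  proof -
    have qi: "q * (inverse q * z) = z" for z using q0 by simp
    show ?thesis using q0 by (simp add: KK_def E2 power2_eq_square mult_ac qi)
  qed
  finally show ?thesis .
qed

end

lemma lam_id0:
  fixes Q z d :: complex
  assumes Q0: "Q \<noteq> 0" and z0: "z \<noteq> 0" and d0: "d \<noteq> 0" and dQ: "d = Q - 1"
  shows "(Q*Q*z - 1) * (Q*Q*Q*z - 1) / (Q * z * (d*d)) =
     (Q*z - 1) * (Q*Q*z - 1) / (z * (d*d)) + (Q*z - 1) / (Q * d * z) + Q*Q * (Q*z - 1) / d + (Q + 1)"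
proof -
  let ?D = "Q * z * (d*d)"
  have N: "(Q*Q*z - 1) * (Q*Q*Q*z - 1) = 
     (Q*z - 1) * (Q*Q*z - 1) * Q + (Q*z - 1) * d + Q*Q * (Q*z - 1) * (Q * z * d) + (Q + 1) * ?D"
    unfolding dQ by (simp add: algebra_simps)
  have 1: "(Q*z - 1) * (Q*Q*z - 1) / (z * (d*d)) = (Q*z - 1) * (Q*Q*z - 1) * Q / ?D"
    using Q0 z0 d0 by (simp add: field_simps)
  have 2: "(Q*z - 1) / (Q * d * z) = (Q*z - 1) * d / ?D"
    using Q0 z0 d0 by (simp add: field_simps)
  have 3: "Q*Q * (Q*z - 1) / d = Q*Q * (Q*z - 1) * (Q * z * d) / ?D"
    using Q0 z0 d0 by (simp add: field_simps)
  have 4: "Q + 1 = (Q + 1) * ?D / ?D"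
    using Q0 z0 d0 by simp
  show ?thesis unfolding 1 2 3 N 
    by (subst 4) (simp only: add_divide_distrib)
qed

lemma pieceA:
  fixes cc Q s d z :: complex
  assumes Q0: "Q \<noteq> 0" and z0: "z \<noteq> 0" and d0: "d \<noteq> 0" and s0: "s \<noteq> 0"
    and cc: "cc * cc = s * s / Q"
  shows "(- cc) * (cc * (Q*z - 1) / d * inverse z) * (- 1 / (s*s)) = (Q*z - 1) / (Q * d * z)"
proof -
  have "(- cc) * (cc * (Q*z - 1) / d * inverse z) * (- 1 / (s*s)) = (cc * cc) * ((Q*z - 1) / (d * z * (s*s)))"
    using z0 d0 s0 by (simp add: field_simps)
  also have "\<dots> = (Q*z - 1) / (Q * d * z)" unfolding cc using Q0 z0 d0 s0 by (simp add: field_simps)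
  finally show ?thesis .
qed

lemma pieceB:
  fixes cc Q s d z :: complex
  assumes Q0: "Q \<noteq> 0" and z0: "z \<noteq> 0" and d0: "d \<noteq> 0" and s0: "s \<noteq> 0"
    and cc: "cc * cc = s * s / Q" and dQ: "d = Q - 1"
  shows "(cc * Q) * ((- cc) * (1 - inverse (Q * z)) / (1 - inverse Q) * z) * (- (Q*Q / (s*s))) = Q*Q * (Q*z - 1) / d"
proof -
  have e1: "1 - inverse Q = d / Q" using Q0 dQ by (simp add: field_simps)
  have e2: "1 - inverse (Q * z) = (Q*z - 1) / (Q * z)" using Q0 z0 by (simp add: field_simps)
  have "(cc * Q) * ((- cc) * (1 - inverse (Q * z)) / (1 - inverse Q) * z) * (- (Q*Q / (s*s)))
     = (cc * cc) * (Q * ((Q*z - 1) / (Q * z)) / (d / Q) * z * (Q*Q / (s*s)))"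
    unfolding e1 e2 by (simp add: algebra_simps)
  also have "\<dots> = Q*Q * (Q*z - 1) / d" unfolding cc using Q0 z0 d0 s0 by (simp add: field_simps)
  finally show ?thesis .
qed


context main begin

definition "yv m = c1 * ((q^2)^m - 1) / (q^2 - 1)"
definition "xv m = (- c1) * (1 - inverse (q^2) ^ m) / (1 - inverse (q^2))"

lemma cc_sq: "c1 * c1 = (q^2 + 1) * (q^2 + 1) / q^2"
  using q0 by (simp add: field_simps power2_eq_square)

lemma coef_step:
  "lam q (Suc (Suc n)) = lam q (Suc n) + (- c1) * (yv (Suc n) * inverse (q^2) ^ n) * (- 1 / (q^2+1)^2)
     + (c1 * q^2) * (xv (Suc n) * (q^2)^n) * (- (q^4 / (q^2+1)^2)) + q * c1"
proof -
  define Q where "Q = q^2"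
  define z where "z = Q^n"
  define d where "d = Q - 1"
  define s where "s = Q + 1"
  have Q0: "Q \<noteq> 0" unfolding Q_def using q0 by simp
  have z0: "z \<noteq> 0" unfolding z_def using Q0 by simp
  have d0: "d \<noteq> 0" unfolding d_def Q_def using Q1 by simp
  have s0': "s \<noteq> 0" unfolding s_def Q_def using s0 by simp
  have cc: "c1 * c1 = s * s / Q" unfolding s_def Q_def by (rule cc_sq)
  have pw: "q powi (2 * int k - 2) = Q^(k - 1)" if "k > 0" for k
  proof -
    have "2 * int k - 2 = int (2 * (k - 1))" using that by simp
    then have "q powi (2 * int k - 2) = q powi (int (2 * (k - 1)))" by (simp only:)
    also have "\<dots> = q ^ (2 * (k - 1))" by (rule power_int_of_nat)
    also have "\<dots> = (q^2)^(k - 1)" by (rule power_mult)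
    finally show ?thesis unfolding Q_def .
  qed
  have qk: "q ^ (2 * k) = Q ^ k" for k unfolding Q_def by (simp add: power_mult)
  have fQ: "q^2 = Q" unfolding Q_def ..
  have q4: "q^4 = Q*Q" unfolding Q_def by (simp add: power_mult[symmetric] power2_eq_square[symmetric])
  have dQ': "Q - 1 = d" unfolding d_def ..
  have sQ': "Q + 1 = s" unfolding s_def ..
  have L1: "lam q (Suc n) = (Q*z - 1) * (Q*Q*z - 1) / (z * (d*d))"
  proof -
    have "lam q (Suc n) = (Q^(Suc n) - 1) * (Q^(Suc n + 1) - 1) / (Q^(Suc n - 1) * (q^2 - 1)^2)"
      unfolding lam_def qk pw[OF zero_less_Suc] ..
    also have "\<dots> = (Q*z - 1) * (Q*Q*z - 1) / (z * (d*d))"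
      by (simp only: fQ dQ') (simp only: power_Suc z_def[symmetric] Suc_eq_plus1[symmetric] diff_Suc_1 power2_eq_square mult.assoc)
    finally show ?thesis .
  qed
  have L2: "lam q (Suc (Suc n)) = (Q*Q*z - 1) * (Q*Q*Q*z - 1) / (Q * z * (d*d))"
  proof -
    have "lam q (Suc (Suc n)) = (Q^(Suc (Suc n)) - 1) * (Q^(Suc (Suc n) + 1) - 1) / (Q^(Suc (Suc n) - 1) * (q^2 - 1)^2)"
      unfolding lam_def qk pw[OF zero_less_Suc] ..
    also have "\<dots> = (Q*Q*z - 1) * (Q*Q*Q*z - 1) / (Q * z * (d*d))"
      by (simp only: fQ dQ') (simp only: power_Suc z_def[symmetric] Suc_eq_plus1[symmetric] diff_Suc_1 power2_eq_square mult.assoc)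
    finally show ?thesis .
  qed
  have A: "(- c1) * (yv (Suc n) * inverse (q^2) ^ n) * (- 1 / (q^2+1)^2) = (Q*z - 1) / (Q * d * z)"
  proof -
    have "(- c1) * (yv (Suc n) * inverse (q^2) ^ n) * (- 1 / (q^2+1)^2)
        = (- c1) * (c1 * (Q*z - 1) / d * inverse z) * (- 1 / (s*s))"
      unfolding yv_def
      by (simp only: fQ q4 power_inverse) (simp only: power_Suc z_def[symmetric] dQ' sQ' power2_eq_square)
    also have "\<dots> = (Q*z - 1) / (Q * d * z)" by (rule pieceA[OF Q0 z0 d0 s0' cc])
    finally show ?thesis .
  qed
  have B: "(c1 * q^2) * (xv (Suc n) * (q^2)^n) * (- (q^4 / (q^2+1)^2)) = Q*Q * (Q*z - 1) / d"
  proof -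
    have "(c1 * q^2) * (xv (Suc n) * (q^2)^n) * (- (q^4 / (q^2+1)^2))
        = (c1 * Q) * ((- c1) * (1 - inverse (Q * z)) / (1 - inverse Q) * z) * (- (Q*Q / (s*s)))"
      unfolding xv_def
      by (simp only: fQ q4 power_inverse) (simp only: power_Suc z_def[symmetric] dQ' sQ' power2_eq_square)
    also have "\<dots> = Q*Q * (Q*z - 1) / d" by (rule pieceB[OF Q0 z0 d0 s0' cc d_def])
    finally show ?thesis .
  qed
  have C: "q * c1 = Q + 1" unfolding Q_def using q0 by (simp add: field_simps power2_eq_square)
  show ?thesis unfolding L1 L2 A B C by (rule lam_id0[OF Q0 z0 d0 d_def])
qed

end

context main begin

lemma ut_pow: "E (uu * t^j) (smul (inverse (q^2) ^ j) (t^j * uu))"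
proof (induction j)
  case 0 then show ?case by (simp add: eqv_refl)
next
  case (Suc j)
  have "E (uu * t ^ Suc j) (smul (inverse (q^2)) (t * uu) * t^j)"
    unfolding power_Suc mult.assoc[symmetric] by (rule eqv_right[OF R2])
  also have "smul (inverse (q^2)) (t * uu) * t^j = smul (inverse (q^2)) (t * (uu * t^j))"
    by (simp add: mult.assoc)
  finally have 1: "E (uu * t ^ Suc j) (smul (inverse (q^2)) (t * (uu * t^j)))" .
  have 2: "E (smul (inverse (q^2)) (t * (uu * t^j))) (smul (inverse (q^2)) (t * smul (inverse (q^2) ^ j) (t^j * uu)))"
    by (rule eqv_smul[OF eqv_left[OF Suc.IH]])
  show ?case using eqv_trans[OF 1 2] by (simp add: mult.assoc mult_ac)
qed

lemma wt_pow: "E (ww * t^j) (smul ((q^2) ^ j) (t^j * ww))"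
proof (induction j)
  case 0 then show ?case by (simp add: eqv_refl)
next
  case (Suc j)
  have "E (ww * t ^ Suc j) (smul (q^2) (t * ww) * t^j)"
    unfolding power_Suc mult.assoc[symmetric] by (rule eqv_right[OF R4])
  also have "smul (q^2) (t * ww) * t^j = smul (q^2) (t * (ww * t^j))"
    by (simp add: mult.assoc)
  finally have 1: "E (ww * t ^ Suc j) (smul (q^2) (t * (ww * t^j)))" .
  have 2: "E (smul (q^2) (t * (ww * t^j))) (smul (q^2) (t * smul ((q^2) ^ j) (t^j * ww)))"
    by (rule eqv_smul[OF eqv_left[OF Suc.IH]])
  show ?case using eqv_trans[OF 1 2] by (simp add: mult.assoc mult_ac)
qed

lemma YY_rec: "YY (t * x) = t * YY x + smul c1 (ww * x)" if "hom 0 x"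
  by (simp add: Y.ZZ_leibniz Em_t YY_t Ep_0[OF that])
lemma XX_rec: "XX (t * x) = t * XX x + smul (- c1) (uu * x)" if "hom 0 x"
  by (simp add: X.ZZ_leibniz Em_t XX_t Ep_0[OF that])

lemma geo1: "(Q::complex) - 1 \<noteq> 0 \<Longrightarrow> k * (P - 1) / (Q - 1) + k * P = k * (Q * P - 1) / (Q - 1)"
  by (simp add: field_simps)
lemma geo2: "1 - (R::complex) \<noteq> 0 \<Longrightarrow> k * (1 - P) / (1 - R) + k * P = k * (1 - R * P) / (1 - R)"
  by (simp add: field_simps)

lemma yv_Suc: "yv (Suc m) + c1 * (q^2)^(Suc m) = yv (Suc (Suc m))"
proof -
  have "q^2 - 1 \<noteq> 0" using Q1 by simp
  from geo1[OF this, of c1 "(q^2)^(Suc m)"] show ?thesis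
    unfolding yv_def power_Suc[of "q^2" "Suc m"] .
qed
lemma xv_Suc: "xv (Suc m) + (- c1) * inverse (q^2) ^ (Suc m) = xv (Suc (Suc m))"
proof -
  have "1 - inverse (q^2) \<noteq> 0" using Q1 q0 by (simp add: field_simps)
  from geo2[OF this, of "- c1" "inverse (q^2) ^ (Suc m)"] show ?thesis
    unfolding xv_def power_Suc[of "inverse (q^2)" "Suc m"] .
qed
lemma yv_1: "yv (Suc 0) = c1" unfolding yv_def using Q1 by simp
lemma xv_1: "xv (Suc 0) = - c1"
proof -
  have "1 - inverse (q^2) \<noteq> 0" using Q1 q0 by (simp add: field_simps)
  then show ?thesis unfolding xv_def by simp
qed

lemma Ypow: "E (YY (t ^ Suc m)) (smul (yv (Suc m)) (t^m * ww))"
proof (induction m)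
  case 0 then show ?case by (simp add: YY_t yv_1 eqv_refl)
next
  case (Suc m)
  have "YY (t ^ Suc (Suc m)) = t * YY (t ^ Suc m) + smul c1 (ww * t ^ Suc m)"
    by (subst power_Suc, rule YY_rec, rule hom_tpow)
  also have "E \<dots> (t * smul (yv (Suc m)) (t^m * ww) + smul c1 (smul ((q^2) ^ Suc m) (t ^ Suc m * ww)))"
    by (rule eqv_add[OF eqv_left[OF Suc.IH] eqv_smul[OF wt_pow]])
  also have "t * smul (yv (Suc m)) (t^m * ww) + smul c1 (smul ((q^2) ^ Suc m) (t ^ Suc m * ww))
      = smul (yv (Suc (Suc m))) (t ^ Suc m * ww)"
    by (simp add: mult.assoc smul_combine yv_Suc[symmetric])
  finally show ?case .
qed

lemma Xpow: "E (XX (t ^ Suc m)) (smul (xv (Suc m)) (t^m * uu))"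
proof (induction m)
  case 0 then show ?case by (simp add: XX_t xv_1 eqv_refl)
next
  case (Suc m)
  have "XX (t ^ Suc (Suc m)) = t * XX (t ^ Suc m) + smul (- c1) (uu * t ^ Suc m)"
    by (subst power_Suc, rule XX_rec, rule hom_tpow)
  also have "E \<dots> (t * smul (xv (Suc m)) (t^m * uu) + smul (- c1) (smul (inverse (q^2) ^ Suc m) (t ^ Suc m * uu)))"
    by (rule eqv_add[OF eqv_left[OF Suc.IH] eqv_smul[OF ut_pow]])
  also have "t * smul (xv (Suc m)) (t^m * uu) + smul (- c1) (smul (inverse (q^2) ^ Suc m) (t ^ Suc m * uu))
      = smul (xv (Suc (Suc m))) (t ^ Suc m * uu)"
    by (simp add: mult.assoc smul_combine xv_Suc[symmetric])
  finally show ?case .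
qed

end

declare eqv_trans[trans] eqv_trans_eq[trans] eq_eqv_trans[trans]

context main begin

lemma KK_one: "KK 1 = 0"
  unfolding KK_def by (simp add: X.ZZ_one Y.ZZ_one X.ZZ_zero Y.ZZ_zero EE_hom0[OF hom_one])

lemma lam0: "lam q 0 = 0" unfolding lam_def by simp

lemma lam1: "lam q 1 = q * c1"
proof -
  define Q where "Q = q^2"
  have Q1': "Q - 1 \<noteq> 0" unfolding Q_def using Q1 by simp
  have a: "q ^ (2 * 1) = Q" unfolding Q_def by simp
  have b: "q ^ (2 * (1 + 1)) = Q * Q" unfolding Q_def by (simp add: power_mult[symmetric] power2_eq_square[symmetric])
  have c: "q powi (2 * int 1 - 2) = 1" by simp
  have "lam q 1 = (Q - 1) * (Q * Q - 1) / (1 * (Q - 1)^2)"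
    unfolding lam_def a b c Q_def ..
  also have "\<dots> = (Q + 1) * ((Q - 1) * (Q - 1)) / ((Q - 1) * (Q - 1))"
    by (simp add: power2_eq_square algebra_simps)
  also have "\<dots> = Q + 1" using Q1' by simp
  also have "\<dots> = q * c1" unfolding Q_def using q0 by (simp add: field_simps power2_eq_square)
  finally show ?thesis .
qed

lemma evp_v: "evp t [:a, 1:] = vv"
  by (simp add: evp_pCons evp_const tt_def smul_def sc_uminus)

lemma coeff_Fp2: "coeff Fp (Suc (Suc 0)) = - 1 / (q^2+1)^2" by (simp add: Fp_def)
lemma coeff_Gp2: "coeff Gp (Suc (Suc 0)) = - (q^4 / (q^2+1)^2)" by (simp add: Gp_def)
lemma degree_Fp: "degree Fp \<le> 2" unfolding Fp_def
  by (rule order_trans[OF degree_pCons_le]) (simp add: order_trans[OF degree_pCons_le])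
lemma degree_Gp: "degree Gp \<le> 2" unfolding Gp_def
  by (rule order_trans[OF degree_pCons_le]) (simp add: order_trans[OF degree_pCons_le])

lemma KT: "\<exists>p. degree p \<le> m \<and> coeff p m = lam q m \<and> E (KK (t^m)) (evp t p)"
proof (induction m)
  case 0
  show ?case by (rule exI[of _ 0]) (simp add: KK_one lam0 eqv_refl)
next
  case (Suc m)
  then obtain p where dp: "degree p \<le> m" and cp: "coeff p m = lam q m" and ep: "E (KK (t^m)) (evp t p)"
    by blast
  have rec: "KK (t^(Suc m)) = t * KK (t^m) + smul (- c1) (uu * YY (t^m)) + smul (c1*q^2) (ww * XX (t^m)) + smul (q*c1) (vv * t^m)"
    by (subst power_Suc, rule K_rec, rule hom_tpow)
  show ?case
  proof (cases m)
    case 0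
    have "KK (t^(Suc m)) = smul (q*c1) (evp t [:a, 1:])"
      unfolding rec using 0 by (simp add: KK_one X.ZZ_one Y.ZZ_one evp_v)
    then have "KK (t^(Suc m)) = evp t (smult (q*c1) [:a, 1:])" by (simp only: evp_smult)
    moreover have "degree (smult (q*c1) [:a, 1:]) \<le> Suc m" using 0
      by (rule_tac order_trans[OF degree_smult_le]) simp
    moreover have "coeff (smult (q*c1) [:a, 1:]) (Suc m) = lam q (Suc m)" using 0 lam1 by simp
    ultimately show ?thesis by (intro exI[of _ "smult (q*c1) [:a, 1:]"]) (simp add: eqv_refl)
  next
    case (Suc n)
    define y where "y = yv (Suc n) * inverse (q^2) ^ n"
    define x where "x = xv (Suc n) * (q^2) ^ n"
    define P where "P = pCons 0 p + smult (- c1) (smult y (monom 1 n * Fp)) + smult (c1 * q^2) (smult x (monom 1 n * Gp))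
        + smult (q*c1) ([:a, 1:] * monom 1 (Suc n))"
    have e1: "E (t * KK (t^m)) (evp t (pCons 0 p))" using eqv_left[OF ep, of t] by (simp add: evp_pCons)
    have e2: "E (uu * YY (t^m)) (evp t (smult y (monom 1 n * Fp)))"
    proof -
      have "E (uu * YY (t^m)) (uu * smul (yv (Suc n)) (t^n * ww))" unfolding Suc by (rule eqv_left[OF Ypow])
      also have "uu * smul (yv (Suc n)) (t^n * ww) = smul (yv (Suc n)) ((uu * t^n) * ww)" by (simp add: mult.assoc)
      also have "E \<dots> (smul (yv (Suc n)) (smul (inverse (q^2) ^ n) (t^n * uu) * ww))"
        by (rule eqv_smul[OF eqv_right[OF ut_pow]])
      also have "\<dots> = smul y (t^n * (uu * ww))" by (simp add: mult.assoc y_def)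
      also have "E \<dots> (smul y (t^n * evp t Fp))" by (rule eqv_smul[OF eqv_left[OF R1]])
      also have "\<dots> = evp t (smult y (monom 1 n * Fp))" by (simp add: evp_smult evp_mult evp_monom)
      finally show ?thesis .
    qed
    have e3: "E (ww * XX (t^m)) (evp t (smult x (monom 1 n * Gp)))"
    proof -
      have "E (ww * XX (t^m)) (ww * smul (xv (Suc n)) (t^n * uu))" unfolding Suc by (rule eqv_left[OF Xpow])
      also have "ww * smul (xv (Suc n)) (t^n * uu) = smul (xv (Suc n)) ((ww * t^n) * uu)" by (simp add: mult.assoc)
      also have "E \<dots> (smul (xv (Suc n)) (smul ((q^2) ^ n) (t^n * ww) * uu))"
        by (rule eqv_smul[OF eqv_right[OF wt_pow]])
      also have "\<dots> = smul x (t^n * (ww * uu))" by (simp add: mult.assoc x_def)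
      also have "E \<dots> (smul x (t^n * evp t Gp))" by (rule eqv_smul[OF eqv_left[OF R3]])
      also have "\<dots> = evp t (smult x (monom 1 n * Gp))" by (simp add: evp_smult evp_mult evp_monom)
      finally show ?thesis .
    qed
    have e4: "vv * t^m = evp t ([:a, 1:] * monom 1 (Suc n))"
    proof -
      have "evp t ([:a, 1:] * monom 1 (Suc n)) = vv * t^(Suc n)"
        by (simp only: evp_mult evp_v evp_monom smul_one)
      then show ?thesis using Suc by simp
    qed
    have eK: "E (KK (t^(Suc m))) (evp t P)"
      unfolding rec P_def evp_add evp_smult
      by (intro eqv_add eqv_smul e1 e2[unfolded evp_smult] e3[unfolded evp_smult] eqv_eq e4)
    have dP: "degree P \<le> Suc m"
      unfolding P_def Suc
    proof (intro degree_add_le)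
      show "degree (pCons 0 p) \<le> Suc (Suc n)" using dp Suc by (simp add: order_trans[OF degree_pCons_le])
      show "degree (smult (- c1) (smult y (monom 1 n * Fp))) \<le> Suc (Suc n)"
        using degree_mult_le[of "monom 1 n" Fp] degree_monom_le[of "1::complex" n] degree_Fp
        by (intro order_trans[OF degree_smult_le] order_trans[OF degree_smult_le]) linarith
      show "degree (smult (c1 * q^2) (smult x (monom 1 n * Gp))) \<le> Suc (Suc n)"
        using degree_mult_le[of "monom 1 n" Gp] degree_monom_le[of "1::complex" n] degree_Gp
        by (intro order_trans[OF degree_smult_le] order_trans[OF degree_smult_le]) linarith
      show "degree (smult (q*c1) ([:a, 1:] * monom 1 (Suc n))) \<le> Suc (Suc n)"
        using degree_mult_le[of "[:a, 1:]" "monom 1 (Suc n)"] degree_monom_le[of "1::complex" "Suc n"]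
        by (intro order_trans[OF degree_smult_le]) simp
    qed
    have c2: "coeff (monom 1 n * Fp) (Suc (Suc n)) = - 1 / (q^2+1)^2"
      by (simp add: coeff_monom_mult coeff_Fp2 Suc_diff_le)
    have c3: "coeff (monom 1 n * Gp) (Suc (Suc n)) = - (q^4 / (q^2+1)^2)"
      by (simp add: coeff_monom_mult coeff_Gp2 Suc_diff_le)
    have c4: "coeff ([:a, 1:] * monom 1 (Suc n)) (Suc (Suc n)) = 1"
      by (simp add: mult.commute[of "[:a, 1:]"] coeff_monom_mult)
    have cP: "coeff P (Suc m) = lam q (Suc m)"
      unfolding P_def Suc using cp Suc
      by (simp add: c2 c3 c4 coef_step y_def x_def mult.assoc)
    show ?thesis using eK dP cP by blast
  qed
qed

end

definition mu :: "complex \<Rightarrow> complex \<Rightarrow> int \<Rightarrow> complex" where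
  "mu q h n = aa q h + q powi (2 * n)"
definition Fm :: "complex \<Rightarrow> complex \<Rightarrow> complex \<Rightarrow> int \<Rightarrow> complex" where
  "Fm q h c n = (q^2 * c - (mu q h n)^2 + h * mu q h n) / (q^2 + 1)^2"

fun gop :: "complex \<Rightarrow> complex \<Rightarrow> complex \<Rightarrow> gen \<Rightarrow> (int \<Rightarrow> complex) \<Rightarrow> (int \<Rightarrow> complex)" where
  "gop q h c U \<phi> = (\<lambda>n. \<phi> (n - 1))"
| "gop q h c V \<phi> = (\<lambda>n. mu q h n * \<phi> n)"
| "gop q h c W \<phi> = (\<lambda>n. Fm q h c (n + 1) * \<phi> (n + 1))"

fun actw :: "complex \<Rightarrow> complex \<Rightarrow> complex \<Rightarrow> gen list \<Rightarrow> (int \<Rightarrow> complex) \<Rightarrow> (int \<Rightarrow> complex)" where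
  "actw q h c [] \<phi> = \<phi>"
| "actw q h c (x # xs) \<phi> = gop q h c x (actw q h c xs \<phi>)"

definition act :: "complex \<Rightarrow> complex \<Rightarrow> complex \<Rightarrow> nc \<Rightarrow> (int \<Rightarrow> complex) \<Rightarrow> (int \<Rightarrow> complex)" where
  "act q h c x \<phi> = (\<lambda>n. \<Sum>w\<in>{w. Rep x w \<noteq> 0}. Rep x w * actw q h c w \<phi> n)"

lemma gop_smul: "gop q h c x (\<lambda>n. d * \<phi> n) = (\<lambda>n. d * gop q h c x \<phi> n)"
  by (cases x) (auto simp: mult_ac)
lemma gop_add: "gop q h c x (\<lambda>n. \<phi> n + \<psi> n) = (\<lambda>n. gop q h c x \<phi> n + gop q h c x \<psi> n)"
  by (cases x) (auto simp: distrib_left)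
lemma actw_smul: "actw q h c ws (\<lambda>n. d * \<phi> n) = (\<lambda>n. d * actw q h c ws \<phi> n)"
  by (induction ws) (auto simp: gop_smul)
lemma actw_add: "actw q h c ws (\<lambda>n. \<phi> n + \<psi> n) = (\<lambda>n. actw q h c ws \<phi> n + actw q h c ws \<psi> n)"
  by (induction ws) (auto simp: gop_add)
lemma actw_zero: "actw q h c ws (\<lambda>n. 0) = (\<lambda>n. 0)"
  using actw_smul[of q h c ws 0 "\<lambda>n. 0"] by simp
lemma actw_append: "actw q h c (a @ b) \<phi> = actw q h c a (actw q h c b \<phi>)"
  by (induction a) auto

lemma act_eq: "finite S \<Longrightarrow> {w. Rep x w \<noteq> 0} \<subseteq> S \<Longrightarrow> act q h c x \<phi> = (\<lambda>n. \<Sum>w\<in>S. Rep x w * actw q h c w \<phi> n)"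
  unfolding act_def by (intro ext sum.mono_neutral_left) auto

lemma act_add: "act q h c (x + y) \<phi> = (\<lambda>n. act q h c x \<phi> n + act q h c y \<phi> n)"
proof -
  let ?S = "{w. Rep x w \<noteq> 0} \<union> {w. Rep y w \<noteq> 0}"
  have fin: "finite ?S" using Rep_fs[of x] Rep_fs[of y] unfolding fs_def by auto
  have e1: "act q h c x \<phi> = (\<lambda>n. \<Sum>w\<in>?S. Rep x w * actw q h c w \<phi> n)" by (rule act_eq[OF fin]) auto
  have e2: "act q h c y \<phi> = (\<lambda>n. \<Sum>w\<in>?S. Rep y w * actw q h c w \<phi> n)" by (rule act_eq[OF fin]) auto
  have e3: "act q h c (x + y) \<phi> = (\<lambda>n. \<Sum>w\<in>?S. Rep (x + y) w * actw q h c w \<phi> n)"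
    by (rule act_eq[OF fin]) (auto simp: Rep_plus tadd_def)
  show ?thesis unfolding e1 e2 e3 by (simp add: Rep_plus tadd_def sum.distrib distrib_right)
qed

lemma act_smul: "act q h c (smul d x) \<phi> = (\<lambda>n. d * act q h c x \<phi> n)"
proof -
  let ?S = "{w. Rep x w \<noteq> 0}"
  have fin: "finite ?S" using Rep_fs[of x] unfolding fs_def by auto
  have e1: "act q h c x \<phi> = (\<lambda>n. \<Sum>w\<in>?S. Rep x w * actw q h c w \<phi> n)" by (rule act_eq[OF fin]) auto
  have e3: "act q h c (smul d x) \<phi> = (\<lambda>n. \<Sum>w\<in>?S. Rep (smul d x) w * actw q h c w \<phi> n)"
    by (rule act_eq[OF fin]) (auto simp: Rep_smul tsmult_def)
  show ?thesis unfolding e1 e3 by (simp add: Rep_smul tsmult_def sum_distrib_left mult.assoc)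
qed

lemma act_zero: "act q h c 0 \<phi> = (\<lambda>n. 0)"
  using act_smul[of q h c 0 0 \<phi>] by simp

lemma act_mono: "act q h c (wmono ws) \<phi> = actw q h c ws \<phi>"
proof -
  have "act q h c (wmono ws) \<phi> = (\<lambda>n. \<Sum>w\<in>{ws}. Rep (wmono ws) w * actw q h c w \<phi> n)"
    by (rule act_eq) (auto simp: wmono.rep_eq tmono_def)
  then show ?thesis by (simp add: wmono.rep_eq tmono_def)
qed

lemma act_one: "act q h c 1 \<phi> = \<phi>"
  using act_mono[of q h c "[]" \<phi>] by (simp add: mono_Nil)

lemma act_mult: "act q h c (x * y) \<phi> = act q h c x (act q h c y \<phi>)"
proof (induction x arbitrary: y rule: nc_induct')
  case zero then show ?case by (simp add: act_zero)
next
  case (add x1 x2) then show ?case by (simp add: distrib_right act_add)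
next
  case (wmono d a)
  have "act q h c (wmono a * y) \<phi> = actw q h c a (act q h c y \<phi>)"
  proof (induction y rule: nc_induct')
    case zero then show ?case by (simp add: act_zero actw_zero)
  next
    case (add y1 y2) then show ?case by (simp add: distrib_left act_add actw_add)
  next
    case (wmono e b)
    show ?case by (simp add: act_smul act_mono actw_smul actw_append flip: mono_append)
  qed
  then show ?case by (simp add: act_smul act_mono)
qed

lemma act_sum: "finite S \<Longrightarrow> act q h c (\<Sum>i\<in>S. f i) \<phi> = (\<lambda>n. \<Sum>i\<in>S. act q h c (f i) \<phi> n)"
  by (induction S rule: finite_induct) (auto simp: act_zero act_add)

context main begin

lemma mu_succ: "mu q h (n + 1) = q^2 * mu q h n + h"
proof -
  have "q powi (2 * (n + 1)) = q^2 * q powi (2 * n)"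
    using q0 by (simp add: distrib_left power_int_add mult.commute)
  then show ?thesis unfolding mu_def using ah by (simp add: algebra_simps)
qed

lemma mu_pred: "mu q h n = q^2 * mu q h (n - 1) + h"
  using mu_succ[of "n - 1"] by simp

lemma act_r1: "act q h c r1 \<phi> = (\<lambda>n. 0)"
proof (rule ext)
  fix n
  let ?m = "mu q h n"
  have "act q h c r1 \<phi> n = ((q^2+1) * Fm q h c n + ?m * ?m + (q^2+1)/q^2 * Fm q h c (n + 1) - c) * \<phi> n"
    unfolding r1_def by (simp add: act_add act_smul act_mono act_one algebra_simps)
  also have "\<dots> = 0"
    unfolding Fm_def mu_succ using q0 s0
    by (simp add: field_simps) (simp add: algebra_simps eval_nat_numeral)
  finally show "act q h c r1 \<phi> n = 0" .
qed

lemma act_r2: "act q h c r2 \<phi> = (\<lambda>n. 0)"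
proof (rule ext)
  fix n
  have "act q h c r2 \<phi> n = (q^2 * mu q h (n - 1) + h - mu q h n) * \<phi> (n - 1)"
    unfolding r2_def by (simp add: act_add act_smul act_mono algebra_simps)
  then show "act q h c r2 \<phi> n = 0" using mu_pred[of n] by simp
qed

lemma act_r4: "act q h c r4 \<phi> = (\<lambda>n. 0)"
proof (rule ext)
  fix n
  have "act q h c r4 \<phi> n = Fm q h c (n + 1) * (mu q h (n + 1) - q^2 * mu q h n - h) * \<phi> (n + 1)"
    unfolding r4_def by (simp add: act_add act_smul act_mono algebra_simps)
  then show "act q h c r4 \<phi> n = 0" using mu_succ[of n] by simp
qed

lemma act_r3: "act q h c r3 \<phi> = (\<lambda>n. 0)"
proof (rule ext)
  fix n
  let ?m = "mu q h n"
  have "act q h c r3 \<phi> n = ((q^2+1) * (Fm q h c n - Fm q h c (n + 1)) + (1 - q^2) * (?m * ?m) - h * ?m) * \<phi> n"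
    unfolding r3_def by (simp add: act_add act_smul act_mono algebra_simps)
  also have "\<dots> = 0"
    unfolding Fm_def mu_succ using q0 s0
    by (simp add: field_simps) (simp add: algebra_simps eval_nat_numeral)
  finally show "act q h c r3 \<phi> n = 0" .
qed

lemma Abs_rel: "r \<in> rels q h c \<Longrightarrow> act q h c (Abs r) \<phi> = (\<lambda>n. 0)"
proof -
  assume "r \<in> rels q h c"
  moreover have "Rep r1 = rel1 q h c" unfolding r1_def rel1_def by (simp add: Rep_plus Rep_smul Rep_one wmono.rep_eq tone_def)
  then have "Abs (rel1 q h c) = r1" using Rep_inverse[of r1] by simp
  moreover have "Rep r2 = rel2 q h c" unfolding r2_def rel2_def by (simp add: Rep_plus Rep_smul Rep_one wmono.rep_eq tone_def)
  then have "Abs (rel2 q h c) = r2" using Rep_inverse[of r2] by simp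
  moreover have "Rep r3 = rel3 q h c" unfolding r3_def rel3_def by (simp add: Rep_plus Rep_smul Rep_one wmono.rep_eq tone_def)
  then have "Abs (rel3 q h c) = r3" using Rep_inverse[of r3] by simp
  moreover have "Rep r4 = rel4 q h c" unfolding r4_def rel4_def by (simp add: Rep_plus Rep_smul Rep_one wmono.rep_eq tone_def)
  then have "Abs (rel4 q h c) = r4" using Rep_inverse[of r4] by simp
  ultimately show ?thesis unfolding rels_def
    by (auto simp: act_r1 act_r2 act_r3 act_r4)
qed

lemma act_ideal: "f \<in> ideal q h c \<Longrightarrow> act q h c (Abs f) \<phi> = (\<lambda>n. 0)"
proof (induction arbitrary: \<phi> rule: ideal.induct)
  case zero
  have "Abs (\<lambda>w. 0) = 0" by (rule Rep_inject[THEN iffD1]) (simp add: Abs_inverse fs_zero Rep_zero)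
  then show ?case by (simp add: act_zero)
next
  case (gen r a b)
  have fr: "fs r" using ideal_fs[OF ideal.gen[OF gen, of "[]" "[]"]]
    by (simp add: tone_def[symmetric] tmul_tone_left tmul_tone_right)
  have "Abs (tmul (tmono a) (tmul r (tmono b))) = wmono a * (Abs r * wmono b)"
    by (rule Rep_inject[THEN iffD1]) (simp add: Abs_inverse fs_tmul fs_tmono fr Rep_times wmono.rep_eq)
  then show ?case by (simp add: act_mult act_mono Abs_rel[OF gen] actw_zero)
next
  case (add x y)
  have "Abs (tadd x y) = Abs x + Abs y"
    using ideal_fs[OF add.hyps(1)] ideal_fs[OF add.hyps(2)]
    by (intro Rep_inject[THEN iffD1]) (simp add: Abs_inverse fs_tadd Rep_plus)
  then show ?case using add.IH by (simp add: act_add)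
next
  case (smult x d)
  have "Abs (tsmult d x) = smul d (Abs x)"
    using ideal_fs[OF smult.hyps(1)]
    by (intro Rep_inject[THEN iffD1]) (simp add: Abs_inverse fs_tsmult Rep_smul)
  then show ?case using smult.IH by (simp add: act_smul)
qed

lemma act_II: "x \<in> II q h c \<Longrightarrow> act q h c x \<phi> = (\<lambda>n. 0)"
  unfolding II_def using act_ideal[of "Rep x"] by (simp add: Rep_inverse)

lemma act_t: "act q h c t \<phi> = (\<lambda>n. q powi (2 * n) * \<phi> n)"
  unfolding tt_def vv_def by (simp add: act_add act_smul act_mono act_one mu_def algebra_simps)

lemma act_tpow: "act q h c (t ^ i) \<phi> = (\<lambda>n. (q powi (2 * n)) ^ i * \<phi> n)"
  by (induction i arbitrary: \<phi>) (simp_all add: act_one act_mult act_t mult.assoc)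

lemma act_evp: "act q h c (evp t p) \<phi> = (\<lambda>n. poly p (q powi (2 * n)) * \<phi> n)"
  unfolding evp_def poly_altdef
  by (simp add: act_sum act_smul act_tpow sum_distrib_right mult.assoc)

lemma evp_faithful: assumes "evp t p \<in> II q h c" shows "p = 0"
proof (rule ccontr)
  assume p0: "p \<noteq> 0"
  have z: "poly p (q ^ (2 * n)) = 0" for n :: nat
  proof -
    have "act q h c (evp t p) (\<lambda>n. 1) (int n) = 0" using act_II[OF assms] by simp
    then show ?thesis unfolding act_evp by (simp add: power_int_of_nat[symmetric])
  qed
  have inj: "inj (\<lambda>n::nat. q ^ (2 * n))"
  proof (rule injI)
    fix n m :: nat assume eq: "q ^ (2 * n) = q ^ (2 * m)"
    show "n = m"
    proof (rule ccontr)
      assume "n \<noteq> m"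
      then consider "n < m" | "m < n" by linarith
      then show False
      proof cases
        case 1
        have e: "2 * n + 2 * (m - n) = 2 * m" using 1 by simp
        have "q ^ (2 * m) = q ^ (2 * n) * q ^ (2 * (m - n))" by (simp only: power_add[symmetric] e)
        then have "q ^ (2 * (m - n)) = 1" using eq q0 by simp
        then show False using qpow[of "2 * (m - n)"] 1 by simp
      next
        case 2
        have e: "2 * m + 2 * (n - m) = 2 * n" using 2 by simp
        have "q ^ (2 * n) = q ^ (2 * m) * q ^ (2 * (n - m))" by (simp only: power_add[symmetric] e)
        then have "q ^ (2 * (n - m)) = 1" using eq q0 by simp
        then show False using qpow[of "2 * (n - m)"] 2 by simp
      qed
    qed
  qed
  have "range (\<lambda>n::nat. q ^ (2 * n)) \<subseteq> {x. poly p x = 0}" using z by auto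
  moreover have "infinite (range (\<lambda>n::nat. q ^ (2 * n)))"
    using inj by (simp add: range_inj_infinite)
  ultimately have "infinite {x. poly p x = 0}" using infinite_super by blast
  then show False using poly_roots_finite[OF p0] by simp
qed

end

fun solA :: "(nat \<Rightarrow> nat \<Rightarrow> complex) \<Rightarrow> (nat \<Rightarrow> complex) \<Rightarrow> nat \<Rightarrow> nat \<Rightarrow> complex" where
  "solA C L k i = (if i = 0 then 1 else if k < i then 0
      else (\<Sum>j<i. solA C L k j * C (k - j) (k - i)) / (L k - L (k - i)))"

declare solA.simps[simp del]

lemma coeff_R:
  fixes kap :: "nat \<Rightarrow> complex poly" and L A :: "nat \<Rightarrow> complex" and k :: nat
  assumes deg: "\<And>m. degree (kap m) \<le> m" and top: "\<And>m. coeff (kap m) m = L m"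
  defines "R \<equiv> (\<Sum>j\<le>k. smult (A j) (kap (k - j))) - smult (L k) (\<Sum>j\<le>k. monom (A j) (k - j))"
  shows "i \<le> k \<Longrightarrow> coeff R (k - i) = (\<Sum>j<i. A j * coeff (kap (k - j)) (k - i)) + A i * (L (k - i) - L k)"
    and "k < n \<Longrightarrow> coeff R n = 0"
proof -
  have cR: "coeff R n = (\<Sum>j\<le>k. A j * coeff (kap (k - j)) n) - L k * (\<Sum>j\<le>k. if k - j = n then A j else 0)" for n
    unfolding R_def by (simp add: coeff_sum coeff_monom)
  {
    assume ik: "i \<le> k"
    have s2: "(\<Sum>j\<le>k. if k - j = k - i then A j else 0) = A i"
    proof -
      have "(\<Sum>j\<le>k. if k - j = k - i then A j else 0) = (\<Sum>j\<le>k. if i = j then A j else 0)"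
        using ik by (intro sum.cong) auto
      also have "\<dots> = A i" using ik by (simp add: sum.delta)
      finally show ?thesis .
    qed
    have s1: "(\<Sum>j\<le>k. A j * coeff (kap (k - j)) (k - i)) = (\<Sum>j\<le>i. A j * coeff (kap (k - j)) (k - i))"
    proof (rule sum.mono_neutral_right)
      show "\<forall>j\<in>{..k} - {..i}. A j * coeff (kap (k - j)) (k - i) = 0"
      proof
        fix j assume "j \<in> {..k} - {..i}"
        then have "degree (kap (k - j)) < k - i" using deg[of "k - j"] by auto
        then show "A j * coeff (kap (k - j)) (k - i) = 0" by (simp add: coeff_eq_0)
      qed
    qed (use ik in auto)
    also have "\<dots> = (\<Sum>j<i. A j * coeff (kap (k - j)) (k - i)) + A i * L (k - i)"
      by (simp add: lessThan_Suc_atMost[symmetric] top)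
    finally have s1': "(\<Sum>j\<le>k. A j * coeff (kap (k - j)) (k - i)) = (\<Sum>j<i. A j * coeff (kap (k - j)) (k - i)) + A i * L (k - i)" .
    show "coeff R (k - i) = (\<Sum>j<i. A j * coeff (kap (k - j)) (k - i)) + A i * (L (k - i) - L k)"
      unfolding cR s1' s2 by (simp add: algebra_simps)
  }
  {
    assume kn: "k < n"
    have "(\<Sum>j\<le>k. A j * coeff (kap (k - j)) n) = 0"
    proof (rule sum.neutral, rule ballI)
      fix j assume "j \<in> {..k}"
      then have "degree (kap (k - j)) < n" using deg[of "k - j"] kn by auto
      then show "A j * coeff (kap (k - j)) n = 0" by (simp add: coeff_eq_0)
    qed
    moreover have "(\<Sum>j\<le>k. if k - j = n then A j else 0) = 0"
      using kn by (intro sum.neutral) auto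
    ultimately show "coeff R n = 0" unfolding cR by simp
  }
qed

lemma solve_unique:
  fixes kap :: "nat \<Rightarrow> complex poly" and L :: "nat \<Rightarrow> complex"
  assumes deg: "\<And>m. degree (kap m) \<le> m" and top: "\<And>m. coeff (kap m) m = L m"
    and dist: "\<And>i. 1 \<le> i \<Longrightarrow> i \<le> k \<Longrightarrow> L (k - i) \<noteq> L k"
  shows "\<exists>!A. (\<forall>j>k. A j = 0) \<and> A 0 = 1 \<and>
     (\<Sum>j\<le>k. smult (A j) (kap (k - j))) - smult (L k) (\<Sum>j\<le>k. monom (A j) (k - j)) = 0"
proof -
  define R where "R A = (\<Sum>j\<le>k. smult (A j) (kap (k - j))) - smult (L k) (\<Sum>j\<le>k. monom (A j) (k - j))"
    for A :: "nat \<Rightarrow> complex"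
  define cond where "cond A i \<longleftrightarrow> (\<Sum>j<i. A j * coeff (kap (k - j)) (k - i)) + A i * (L (k - i) - L k) = 0"
    for A :: "nat \<Rightarrow> complex" and i
  have Req: "R A = 0 \<longleftrightarrow> (\<forall>i\<le>k. cond A i)" for A
  proof
    assume "R A = 0"
    then show "\<forall>i\<le>k. cond A i"
      unfolding cond_def using coeff_R(1)[OF deg top, where k=k and A=A] unfolding R_def by (metis coeff_0)
  next
    assume c: "\<forall>i\<le>k. cond A i"
    show "R A = 0"
    proof (rule poly_eqI)
      fix n
      show "coeff (R A) n = coeff 0 n"
      proof (cases "k < n")
        case True then show ?thesis using coeff_R(2)[OF deg top, where k=k and A=A and n=n] unfolding R_def by simp
      next
        case False
        then have "n = k - (k - n)" "k - n \<le> k" by auto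
        then show ?thesis using coeff_R(1)[OF deg top, where k=k and A=A and i="k - n"] c unfolding R_def cond_def
          by (metis coeff_0)
      qed
    qed
  qed
  define S where "S = solA (\<lambda>m n. coeff (kap m) n) L k"
  have S0: "S 0 = 1" unfolding S_def by (simp add: solA.simps)
  have Sk: "\<forall>j>k. S j = 0" unfolding S_def by (simp add: solA.simps)
  have Scond: "cond S i" if "i \<le> k" for i
  proof (cases "i = 0")
    case True then show ?thesis unfolding cond_def by simp
  next
    case False
    have d: "L k - L (k - i) \<noteq> 0" using dist[of i] False that by auto
    have "S i = (\<Sum>j<i. S j * coeff (kap (k - j)) (k - i)) / (L k - L (k - i))"
      unfolding S_def using False that by (subst solA.simps) simp
    then show ?thesis unfolding cond_def using d by (simp add: field_simps)
  qed
  show ?thesis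
  proof (rule ex1I[of _ S])
    show "(\<forall>j>k. S j = 0) \<and> S 0 = 1 \<and> (\<Sum>j\<le>k. smult (S j) (kap (k - j))) - smult (L k) (\<Sum>j\<le>k. monom (S j) (k - j)) = 0"
      using S0 Sk Scond Req[of S] unfolding R_def by blast
  next
    fix B assume B: "(\<forall>j>k. B j = 0) \<and> B 0 = 1 \<and> (\<Sum>j\<le>k. smult (B j) (kap (k - j))) - smult (L k) (\<Sum>j\<le>k. monom (B j) (k - j)) = 0"
    then have Bc: "\<forall>i\<le>k. cond B i" using Req[of B] unfolding R_def by blast
    show "B = S"
    proof (rule ext)
      fix i show "B i = S i"
      proof (induction i rule: less_induct)
        case (less i)
        show ?case
        proof (cases "i = 0 \<or> k < i")
          case True then show ?thesis using B S0 Sk by auto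
        next
          case False
          then have ik: "i \<le> k" and i1: "1 \<le> i" by auto
          have d: "L (k - i) - L k \<noteq> 0" using dist[OF i1 ik] by simp
          have sums: "(\<Sum>j<i. B j * coeff (kap (k - j)) (k - i)) = (\<Sum>j<i. S j * coeff (kap (k - j)) (k - i))"
            using less.IH by (intro sum.cong) auto
          have "B i * (L (k - i) - L k) = S i * (L (k - i) - L k)"
            using Bc[rule_format, OF ik] Scond[OF ik] sums unfolding cond_def
            by (metis add_left_cancel)
          then show ?thesis using d by simp
        qed
      qed
    qed
  qed
qed


context main begin
lemma EE_add: "EE (x + y) = EE x + EE y" unfolding EE_def by (rule LO_add[OF fs_DG])
lemma EE_smul: "EE (smul d x) = smul d (EE x)" unfolding EE_def by (rule LO_smul[OF fs_DG])
lemma KK_smul: "KK (smul d x) = smul d (KK x)"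
proof -
  have "KK (smul d x) = smul (q/2) (smul d (XX (YY x) + YY (XX x))) + smul (q^2*(1+q^2)/(2*(1-q^2)^2)) (smul d (EE x))"
    unfolding KK_def by (simp only: X.ZZ_smul Y.ZZ_smul EE_smul smul_add)
  also have "\<dots> = smul d (KK x)" unfolding KK_def smul_add smul_smul by (simp only: mult.commute)
  finally show ?thesis .
qed
lemma KK_add: "KK (x + y) = KK x + KK y"
proof -
  have "KK (x + y) = smul (q/2) ((XX (YY x) + YY (XX x)) + (XX (YY y) + YY (XX y))) + (smul (q^2*(1+q^2)/(2*(1-q^2)^2)) (EE x) + smul (q^2*(1+q^2)/(2*(1-q^2)^2)) (EE y))"
    unfolding KK_def by (simp only: X.ZZ_add Y.ZZ_add EE_add smul_add add_ac)
  also have "\<dots> = KK x + KK y" unfolding KK_def smul_add by (simp only: add_ac)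
  finally show ?thesis .
qed
lemma lam_L:
  fixes Q d :: complex
  assumes Q_def: "Q = q^2" and d_def: "d = Q - 1"
  shows "lam q n = (Q^n - 1) * (Q * Q^n - 1) * Q / (Q^n * (d * d))"
proof -
  have Q0: "Q \<noteq> 0" unfolding Q_def using q0 by simp
  have i: "2 * int n = int (2 * n)" by simp
  have "q powi (2 * int n - 2) = q powi (2 * int n) / q powi 2" using q0 by (intro power_int_diff) simp
  also have "\<dots> = q ^ (2 * n) / q ^ 2" unfolding i power_int_of_nat by simp
  also have "\<dots> = Q^n / Q" unfolding Q_def by (simp only: power_mult)
  finally have p: "q powi (2 * int n - 2) = Q^n / Q" .
  have a: "q ^ (2 * n) = Q ^ n" unfolding Q_def by (simp only: power_mult)
  have b: "q ^ (2 * (n + 1)) = Q * Q ^ n" unfolding Q_def by (simp only: power_mult power_Suc Suc_eq_plus1[symmetric])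
  have c: "(q^2 - 1)^2 = d * d" unfolding d_def Q_def by (simp only: power2_eq_square)
  have "lam q n = (Q ^ n - 1) * (Q * Q ^ n - 1) / (Q^n / Q * (d * d))"
    unfolding lam_def p a b c ..
  also have "\<dots> = (Q^n - 1) * (Q * Q^n - 1) * Q / (Q^n * (d * d))" using Q0 by simp
  finally show ?thesis .
qed
lemma lam_ne: assumes "m < k" shows "lam q m \<noteq> lam q k"
proof
  assume eq: "lam q m = lam q k"
  define Q where "Q = q^2"
  define d where "d = Q - 1"
  have Q0: "Q \<noteq> 0" unfolding Q_def using q0 by simp
  have d0: "d \<noteq> 0" unfolding d_def Q_def using Q1 by simp
  define x where "x = Q^m"
  define y where "y = Q^k"
  have x0: "x \<noteq> 0" unfolding x_def using Q0 by simp
  have y0: "y \<noteq> 0" unfolding y_def using Q0 by simp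
  from eq have "(x - 1) * (Q * x - 1) * Q / (x * (d * d)) = (y - 1) * (Q * y - 1) * Q / (y * (d * d))"
    unfolding lam_L[OF Q_def d_def] x_def y_def .
  then have "(x - 1) * (Q * x - 1) * Q * (y * (d * d)) = (y - 1) * (Q * y - 1) * Q * (x * (d * d))"
    using x0 y0 d0 by (simp add: frac_eq_eq)
  then have "((x - 1) * (Q * x - 1) * y - (y - 1) * (Q * y - 1) * x) * (Q * (d * d)) = 0"
    by (simp add: algebra_simps)
  then have "(x - 1) * (Q * x - 1) * y - (y - 1) * (Q * y - 1) * x = 0" using Q0 d0 by simp
  moreover have "(x - 1) * (Q * x - 1) * y - (y - 1) * (Q * y - 1) * x = (x - y) * (Q * x * y - 1)"
    by (simp add: algebra_simps)
  ultimately have "(x - y) * (Q * x * y - 1) = 0" by simp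
  moreover have "x \<noteq> y"
  proof
    assume "x = y"
    have e: "2 * m + 2 * (k - m) = 2 * k" using assms by simp
    have "q ^ (2 * k) = q ^ (2 * m) * q ^ (2 * (k - m))" by (simp only: power_add[symmetric] e)
    moreover have "q ^ (2 * k) = q ^ (2 * m)" using \<open>x = y\<close> unfolding x_def y_def Q_def by (simp only: power_mult)
    ultimately have "q ^ (2 * (k - m)) = 1" using q0 by simp
    then show False using qpow[of "2 * (k - m)"] assms by simp
  qed
  moreover have "Q * x * y \<noteq> 1"
  proof
    assume "Q * x * y = 1"
    moreover have "Q * x * y = q ^ (2 * (1 + m + k))" unfolding x_def y_def Q_def
      by (simp only: power_mult[symmetric] power_add[symmetric] power_one_right distrib_left mult_1_right)
    ultimately have "q ^ (2 * (1 + m + k)) = 1" by simp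
    then show False using qpow[of "2 * (1 + m + k)"] by simp
  qed
  ultimately show False by simp
qed

end

context main begin

lemma KK_zero: "KK 0 = 0" using KK_smul[of 0 0] by simp
lemma KK_sum: "finite S \<Longrightarrow> KK (\<Sum>i\<in>S. f i) = (\<Sum>i\<in>S. KK (f i))"
  by (induction S rule: finite_induct) (auto simp: KK_zero KK_add)

lemma Rep_t: "Rep t = vtilde q h"
  unfolding tt_def vtilde_def vv_def aa_def by (simp add: Rep_plus Rep_smul Rep_one wmono.rep_eq tone_def)

lemma Rep_tpow: "Rep (t ^ n) = tpow (vtilde q h) n"
  by (induction n) (simp_all add: Rep_one Rep_times Rep_t)

lemma Rep_Pn: "Ppoly q h k A = Rep (\<Sum>j\<le>k. smul (A j) (t ^ (k - j)))"
  unfolding Ppoly_def by (simp add: Rep_sum Rep_smul tsmult_def Rep_tpow)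

lemma actX_Rep: "actX q (Rep x) = Rep (XX x)"
  unfolding actX_def ZZ_def by (simp add: Rep_LO[OF X.ZZ_fs] wordX_Z[abs_def])
lemma actY_Rep: "actY q (Rep x) = Rep (YY x)"
  unfolding actY_def ZZ_def by (simp add: Rep_LO[OF Y.ZZ_fs] wordY_Z[abs_def])
lemma actE_Rep: "actE q (Rep x) = Rep (EE x)"
  unfolding actE_def EE_def by (simp add: Rep_LO[OF fs_DG] DG_def)
lemma actK_Rep: "actK q (Rep x) = Rep (KK x)"
  unfolding actK_def KK_def by (simp add: actX_Rep actY_Rep actE_Rep Rep_plus Rep_smul)


end

theorem proposition2:
  fixes q h c :: complex and k :: nat
  assumes "generic_q q"
  shows "\<exists>!A :: nat \<Rightarrow> complex. (\<forall>j>k. A j = 0) \<and> A 0 = 1 \<and>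
           tadd (actK q (Ppoly q h k A)) (tsmult (- lam q k) (Ppoly q h k A)) \<in> ideal q h c"
proof -
  interpret main q h c using assms by unfold_locales
  have "\<forall>m. \<exists>p. degree p \<le> m \<and> coeff p m = lam q m \<and> eqv q h c (KK (tt q h ^ m)) (evp (tt q h) p)"
    using KT by blast
  then obtain kap where kap0: "\<forall>m. degree (kap m) \<le> m \<and> coeff (kap m) m = lam q m \<and> eqv q h c (KK (tt q h ^ m)) (evp (tt q h) (kap m))"
    by (rule choice[THEN exE])
  have kap_deg: "\<And>m. degree (kap m) \<le> m" using kap0 by blast
  have kap_top: "\<And>m. coeff (kap m) m = lam q m" using kap0 by blast
  have kap_eqv: "\<And>m. eqv q h c (KK (tt q h ^ m)) (evp (tt q h) (kap m))" using kap0 by blast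
  define R where "R A = (\<Sum>j\<le>k. smult (A j) (kap (k - j))) - smult (lam q k) (\<Sum>j\<le>k. monom (A j) (k - j))"
    for A :: "nat \<Rightarrow> complex"
  have key: "tadd (actK q (Ppoly q h k A)) (tsmult (- lam q k) (Ppoly q h k A)) \<in> ideal q h c \<longleftrightarrow> R A = 0" for A
  proof -
    define P where "P = (\<Sum>j\<le>k. smul (A j) (tt q h ^ (k - j)))"
    have "tadd (actK q (Ppoly q h k A)) (tsmult (- lam q k) (Ppoly q h k A)) = Rep (KK P + smul (- lam q k) P)"
      unfolding Rep_Pn P_def[symmetric] actK_Rep by (simp add: Rep_plus Rep_smul)
    then have m1: "tadd (actK q (Ppoly q h k A)) (tsmult (- lam q k) (Ppoly q h k A)) \<in> ideal q h c
        \<longleftrightarrow> KK P + smul (- lam q k) P \<in> II q h c" unfolding II_def by simp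
    have eK: "eqv q h c (KK P) (evp (tt q h) (\<Sum>j\<le>k. smult (A j) (kap (k - j))))"
    proof -
      have "KK P = (\<Sum>j\<le>k. smul (A j) (KK (tt q h ^ (k - j))))"
        unfolding P_def by (simp add: KK_sum KK_smul)
      moreover have "evp (tt q h) (\<Sum>j\<le>k. smult (A j) (kap (k - j))) = (\<Sum>j\<le>k. smul (A j) (evp (tt q h) (kap (k - j))))"
        by (simp add: evp_sum evp_smult)
      moreover have "eqv q h c (\<Sum>j\<le>k. smul (A j) (KK (tt q h ^ (k - j)))) (\<Sum>j\<le>k. smul (A j) (evp (tt q h) (kap (k - j))))"
        by (intro eqv_sum eqv_smul kap_eqv) simp
      ultimately show ?thesis by simp
    qed
    have eP: "P = evp (tt q h) (\<Sum>j\<le>k. monom (A j) (k - j))"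
      unfolding P_def by (simp add: evp_sum evp_monom)
    have e: "eqv q h c (KK P + smul (- lam q k) P) (evp (tt q h) (R A))"
    proof -
      have "evp (tt q h) (R A) = evp (tt q h) (\<Sum>j\<le>k. smult (A j) (kap (k - j))) + smul (- lam q k) P"
        unfolding R_def evp_diff evp_smult eP by (simp add: smul_def sc_uminus)
      then show ?thesis using eqv_add[OF eK eqv_refl[of q h c "smul (- lam q k) P"]] by simp
    qed
    have m2: "KK P + smul (- lam q k) P \<in> II q h c \<longleftrightarrow> evp (tt q h) (R A) \<in> II q h c"
    proof
      assume "KK P + smul (- lam q k) P \<in> II q h c"
      from II_diff[OF this e[unfolded eqv_def]] show "evp (tt q h) (R A) \<in> II q h c" by simp
    next
      assume "evp (tt q h) (R A) \<in> II q h c"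
      from II_add[OF e[unfolded eqv_def] this] show "KK P + smul (- lam q k) P \<in> II q h c" by simp
    qed
    have m3: "evp (tt q h) (R A) \<in> II q h c \<longleftrightarrow> R A = 0"
      using evp_faithful[of "R A"] II_zero by auto
    show ?thesis using m1 m2 m3 by simp
  qed
  have U: "\<exists>!A. (\<forall>j>k. A j = 0) \<and> A 0 = 1 \<and> R A = 0"
    unfolding R_def
  proof (rule solve_unique)
    show "\<And>m. degree (kap m) \<le> m" by (rule kap_deg)
    show "\<And>m. coeff (kap m) m = lam q m" by (rule kap_top)
    show "\<And>i. 1 \<le> i \<Longrightarrow> i \<le> k \<Longrightarrow> lam q (k - i) \<noteq> lam q k" by (rule lam_ne) auto
  qed
  show ?thesis using U key by simp
qed


end
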